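(* Fix $k\in\mathbb{N}$, positive constants $b_0,b_1,b_2,\lambda_0,\lambda_1$ and $\mu\in(0,1)$. There exists $C>0$ depending only on $b_0,b_1,\lambda_0,\lambda_1,\mu$ (and the fixed $k$) such that the following holds. Let $T\geq10$, $\ell<r$, $a^\pm\in\mathbb{R}^k$, $g:[\ell,r]\to\mathbb{R}$ Lipschitz with $g(\ell)=g(r)=0$, and $P\subset\big((\ell,\ell+T^{1/2})\cup(r-T^{1/2},r)\big)\cap(\ell,r)$ finite. Suppose that $r-\ell\leq b_0T$, $|P|\leq b_0T$, $|g(x)-g(y)|\leq b_1T|x-y|$ for all $x,y$, $a^\pm_j-a^\pm_{j+1}\geq\lambda_0T^{1/2}$ for $j\in\{1,\dots,k-1\}$, $a^-_k-g(\ell)\geq\lambda_1T$, $a^+_k-g(r)\geq\lambda_1T$, $a^-_1-g(\ell)\leq b_2T^2$, $a^+_1-g(r)\leq b_2T^2$. Then $\mathbb{P}_{\mathcal{L}}(\mathsf{H})\geq C^{-1}e^{-CT^{5/2}}$.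
   Context: $\mathbb{P}_{\mathrm{free}}$ is the law of $k$ independent Brownian bridges (diffusion parameter one) $\mathcal{L}=(\mathcal{L}_1,\dots,\mathcal{L}_k)$ on $[\ell,r]$ with $\mathcal{L}_j(\ell)=a^-_j$, $\mathcal{L}_j(r)=a^+_j$. $W(\mathcal{L})=1$ if $\mathcal{L}_j(p)>g(p)$ for all $p\in P$ and all $j$, and $0$ otherwise; $\mathbb{P}_{\mathcal{L}}$ is given by $d\mathbb{P}_{\mathcal{L}}/d\mathbb{P}_{\mathrm{free}}=W/\mathbb{E}_{\mathrm{free}}[W]$. $\mathsf{H}$ is the event that $\mathcal{L}_j(p)-\mathcal{L}_{j+1}(p)\geq\mu\lambda_0T^{1/2}$ for all $p\in P$, $j\in\{1,\dots,k-1\}$, and $\mathcal{L}_k(p)-g(p)\geq\mu\lambda_1T$ for all $p\in P$. *)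

theory Defs
  imports "HOL-Probability.Probability"
begin

definition heat_kernel :: "real \<Rightarrow> real \<Rightarrow> real" where
  "heat_kernel t x = exp (- (x\<^sup>2) / (2 * t)) / sqrt (2 * pi * t)"

text \<open>Joint density of a single Brownian bridge on [l,r] from a to b, observed at the
  strictly increasing interior times ps, evaluated at the values y p (p in ps).\<close>
definition bb_density :: "real \<Rightarrow> real \<Rightarrow> real \<Rightarrow> real \<Rightarrow> real list \<Rightarrow> (real \<Rightarrow> real) \<Rightarrow> real" where
  "bb_density l r a b ps y =
     (let ts = l # ps @ [r]; xs = a # map y ps @ [b] in
      (\<Prod>i<length ps + 1. heat_kernel (ts ! (i+1) - ts ! i) (xs ! (i+1) - xs ! i))
      / heat_kernel (r - l) (b - a))"

text \<open>Finite-dimensional marginal of P_free: the law of (L_j(p)) for j in {1..k}, p in P, where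
  L_1,...,L_k are independent Brownian bridges on [l,r] with L_j(l) = am j, L_j(r) = ap j.\<close>
definition free_fdd ::
  "nat \<Rightarrow> real \<Rightarrow> real \<Rightarrow> (nat \<Rightarrow> real) \<Rightarrow> (nat \<Rightarrow> real) \<Rightarrow> real set \<Rightarrow> (nat \<times> real \<Rightarrow> real) measure" where
  "free_fdd k l r am ap P =
     density (PiM ({1..k} \<times> P) (\<lambda>_. lborel))
       (\<lambda>x. ennreal (\<Prod>j\<in>{1..k}. bb_density l r (am j) (ap j) (sorted_list_of_set P) (\<lambda>p. x (j, p))))"

definition W_event :: "nat \<Rightarrow> real set \<Rightarrow> (real \<Rightarrow> real) \<Rightarrow> (nat \<times> real \<Rightarrow> real) set" where
  "W_event k P g = {x \<in> space (PiM ({1..k} \<times> P) (\<lambda>_. lborel)). \<forall>j\<in>{1..k}. \<forall>p\<in>P. x (j, p) > g p}"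

definition H_event :: "nat \<Rightarrow> real set \<Rightarrow> (real \<Rightarrow> real) \<Rightarrow> real \<Rightarrow> real \<Rightarrow> real \<Rightarrow> real \<Rightarrow>
    (nat \<times> real \<Rightarrow> real) set" where
  "H_event k P g \<mu> lam0 lam1 T = {x \<in> space (PiM ({1..k} \<times> P) (\<lambda>_. lborel)).
      (\<forall>p\<in>P. \<forall>j\<in>{1..<k}. x (j, p) - x (j+1, p) \<ge> \<mu> * lam0 * sqrt T)
    \<and> (\<forall>p\<in>P. x (k, p) - g p \<ge> \<mu> * lam1 * T)}"

text \<open>P_L(H) = E_free[W 1_H] / E_free[W].\<close>
definition PL_H :: "nat \<Rightarrow> real \<Rightarrow> real \<Rightarrow> (nat \<Rightarrow> real) \<Rightarrow> (nat \<Rightarrow> real) \<Rightarrow> real set \<Rightarrow> (real \<Rightarrow> real)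
    \<Rightarrow> real \<Rightarrow> real \<Rightarrow> real \<Rightarrow> real \<Rightarrow> real" where
  "PL_H k l r am ap P g \<mu> lam0 lam1 T =
     measure (free_fdd k l r am ap P) (W_event k P g \<inter> H_event k P g \<mu> lam0 lam1 T)
     / measure (free_fdd k l r am ap P) (W_event k P g)"

end

theory Submission
  imports Defs
begin

lemma hk_nd: "t > 0 \<Longrightarrow> heat_kernel t x = normal_density 0 (sqrt t) x"
  by (simp add: heat_kernel_def normal_density_def)

lemma hk_pos: "t > 0 \<Longrightarrow> heat_kernel t x > 0"
  by (simp add: heat_kernel_def)

lemma hk_nonneg: "t \<ge> 0 \<Longrightarrow> heat_kernel t x \<ge> 0"
  by (simp add: heat_kernel_def)

lemma ck_exp:
  fixes t0 t1 a b y :: real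
  assumes t0: "t0 > 0" and t1: "t1 > 0"
  shows "- ((y - a)\<^sup>2) / (2 * t0) + - ((b - y)\<^sup>2) / (2 * t1) =
      - ((b - a)\<^sup>2) / (2 * (t0 + t1)) + - (y - (a + t0 / (t0 + t1) * (b - a)))\<^sup>2 / (2 * (t0 * t1 / (t0 + t1)))"
proof -
  define d where "d = t0 + t1"
  define X where "X = d*(y-a) - t0*(b-a)"
  have d: "d > 0" using assms by (simp add: d_def)
  have h1: "y - (a + t0 / (t0 + t1) * (b - a)) = X / d"
    using assms unfolding X_def d_def by (simp add: field_simps)
  have h2: "(X / d)\<^sup>2 / (2 * (t0 * t1 / (t0 + t1))) = X\<^sup>2 / (2 * t0 * t1 * d)"
    using assms d unfolding d_def[symmetric] by (simp add: power2_eq_square field_simps)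
  have L: "- ((y - a)\<^sup>2) / (2 * t0) + - ((b - y)\<^sup>2) / (2 * t1) = - (t1 * d * (y-a)\<^sup>2 + t0 * d * (b-y)\<^sup>2) / (2 * t0 * t1 * d)"
    using assms d by (simp add: field_simps)
  have R: "- ((b - a)\<^sup>2) / (2 * d) + - X\<^sup>2 / (2 * t0 * t1 * d) = - (t0 * t1 * (b-a)\<^sup>2 + X\<^sup>2) / (2 * t0 * t1 * d)"
    using assms d by (simp add: field_simps)
  have I: "t1 * d * (y-a)\<^sup>2 + t0 * d * (b-y)\<^sup>2 = t0 * t1 * (b-a)\<^sup>2 + X\<^sup>2"
    unfolding X_def d_def by (simp add: power2_eq_square algebra_simps)
  show ?thesis unfolding h1 using h2 L R I d_def by simp
qed

lemma ck_identity:
  fixes t0 t1 a b y :: real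
  assumes t0: "t0 > 0" and t1: "t1 > 0"
  shows "heat_kernel t0 (y - a) * heat_kernel t1 (b - y) =
    heat_kernel (t0 + t1) (b - a) *
    normal_density (a + t0 / (t0 + t1) * (b - a)) (sqrt (t0 * t1 / (t0 + t1))) y"
proof -
  define s where "s = t0 * t1 / (t0 + t1)"
  have s: "s > 0" using assms by (simp add: s_def)
  have sq: "(sqrt s)\<^sup>2 = s" using s by simp
  have e: "- ((y - a)\<^sup>2) / (2 * t0) + - ((b - y)\<^sup>2) / (2 * t1) =
      - ((b - a)\<^sup>2) / (2 * (t0 + t1)) + - (y - (a + t0 / (t0 + t1) * (b - a)))\<^sup>2 / (2 * s)"
    using ck_exp[OF assms] unfolding s_def .
  have p: "sqrt (2 * pi * t0) * sqrt (2 * pi * t1) = sqrt (2 * pi * (t0 + t1)) * sqrt (2 * pi * s)"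
  proof -
    have "(2 * pi * t0) * (2 * pi * t1) = (2 * pi * (t0 + t1)) * (2 * pi * s)"
      using assms unfolding s_def by (simp add: field_simps)
    then show ?thesis by (simp add: real_sqrt_mult[symmetric])
  qed
  have "heat_kernel t0 (y - a) * heat_kernel t1 (b - y) =
        exp (- ((y - a)\<^sup>2) / (2 * t0) + - ((b - y)\<^sup>2) / (2 * t1)) / (sqrt (2 * pi * t0) * sqrt (2 * pi * t1))"
    unfolding heat_kernel_def exp_add by simp
  also have "\<dots> = exp (- ((b - a)\<^sup>2) / (2 * (t0 + t1)) + - (y - (a + t0 / (t0 + t1) * (b - a)))\<^sup>2 / (2 * s))
        / (sqrt (2 * pi * (t0 + t1)) * sqrt (2 * pi * s))" by (simp only: e p)
  also have "\<dots> = heat_kernel (t0 + t1) (b - a) *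
    normal_density (a + t0 / (t0 + t1) * (b - a)) (sqrt s) y"
    unfolding heat_kernel_def normal_density_def sq exp_add by simp
  finally show ?thesis by (simp add: s_def)
qed

lemma nd_integral_1:
  assumes "\<sigma> > 0"
  shows "(\<integral>\<^sup>+ y. ennreal (normal_density \<mu> \<sigma> y) \<partial>lborel) = 1"
proof -
  interpret prob_space "density lborel (normal_density \<mu> \<sigma>)"
    by (rule prob_space_normal_density[OF assms])
  have "emeasure (density lborel (normal_density \<mu> \<sigma>)) UNIV = 1"
    using emeasure_space_1 by simp
  then show ?thesis by (simp add: emeasure_density)
qed

lemma nd_interval_lb:
  fixes \<mu> \<sigma> c w D :: real
  assumes s: "\<sigma> > 0" and w: "w > 0" and D: "D \<ge> 0" and mc: "\<bar>\<mu> - c\<bar> \<le> w + D"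
  shows "(\<integral>\<^sup>+ y. ennreal (normal_density \<mu> \<sigma> y) * indicator {c - w..c + w} y \<partial>lborel)
     \<ge> ennreal (min (w / \<sigma>) 1 * exp (- ((D / \<sigma> + 1)\<^sup>2 / 2)) / sqrt (2 * pi))"
proof -
  define L where "L = min w \<sigma>"
  have L: "L > 0" "L \<le> w" "L \<le> \<sigma>" using s w by (auto simp: L_def)
  obtain u where u: "u - c \<ge> - w" "u + L - c \<le> w" "\<forall>y\<in>{u..u+L}. \<bar>y - \<mu>\<bar> \<le> D + L"
  proof (cases "\<mu> \<ge> c")
    case True
    define pp where "pp = min \<mu> (c + w)"
    show ?thesis
      apply (rule that[of "pp - L"])
      using True L mc D unfolding pp_def by (auto simp: abs_if split: if_splits)
  next
    case False
    define pp where "pp = max \<mu> (c - w)"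
    show ?thesis
      apply (rule that[of "pp"])
      using False L mc D unfolding pp_def by (auto simp: abs_if split: if_splits)
  qed
  define K where "K = exp (- ((D + L)\<^sup>2 / (2 * \<sigma>\<^sup>2))) / (\<sigma> * sqrt (2 * pi))"
  have Kpos: "K \<ge> 0" using s by (simp add: K_def)
  have nd_ge: "normal_density \<mu> \<sigma> y \<ge> K" if "y \<in> {u..u+L}" for y
  proof -
    have "\<bar>y - \<mu>\<bar> \<le> D + L" using u that by auto
    then have "\<bar>y - \<mu>\<bar>\<^sup>2 \<le> (D + L)\<^sup>2"
      by (intro power_mono) auto
    then have "(y - \<mu>)\<^sup>2 \<le> (D + L)\<^sup>2" by simp
    then have "(y - \<mu>)\<^sup>2 / (2 * \<sigma>\<^sup>2) \<le> (D + L)\<^sup>2 / (2 * \<sigma>\<^sup>2)"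
      using s by (simp add: divide_right_mono)
    then have "exp (- ((D + L)\<^sup>2 / (2 * \<sigma>\<^sup>2))) \<le> exp (- (y - \<mu>)\<^sup>2 / (2 * \<sigma>\<^sup>2))" by simp
    moreover have "sqrt (2 * pi * \<sigma>\<^sup>2) = \<sigma> * sqrt (2 * pi)" using s
      by (simp add: real_sqrt_mult mult.commute)
    ultimately show ?thesis using s unfolding K_def normal_density_def
      by (simp add: divide_right_mono)
  qed
  have I1: "(\<integral>\<^sup>+ y. ennreal K * indicator {u..u+L} y \<partial>lborel) \<le>
        (\<integral>\<^sup>+ y. ennreal (normal_density \<mu> \<sigma> y) * indicator {c - w..c + w} y \<partial>lborel)"
  proof (rule nn_integral_mono)
    fix y
    show "ennreal K * indicator {u..u+L} y \<le> ennreal (normal_density \<mu> \<sigma> y) * indicator {c - w..c + w} y"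
    proof (cases "y \<in> {u..u+L}")
      case True
      then have "y \<in> {c - w..c + w}" using u by auto
      then show ?thesis using True nd_ge[OF True] by (simp add: ennreal_leI)
    qed simp
  qed
  have I2: "(\<integral>\<^sup>+ y. ennreal K * indicator {u..u+L} y \<partial>lborel) = ennreal (K * L)"
    using L Kpos by (simp add: nn_integral_cmult_indicator ennreal_mult)
  have I3: "min (w / \<sigma>) 1 * exp (- ((D / \<sigma> + 1)\<^sup>2 / 2)) / sqrt (2 * pi) \<le> K * L"
  proof -
    have m: "min (w / \<sigma>) 1 = L / \<sigma>" using s w by (auto simp: L_def min_def field_simps)
    have "(D + L)\<^sup>2 / (2 * \<sigma>\<^sup>2) = ((D / \<sigma> + L / \<sigma>)\<^sup>2 / 2)" using s
      by (simp add: field_simps power2_eq_square)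
    also have "\<dots> \<le> (D / \<sigma> + 1)\<^sup>2 / 2"
      using s L D by (intro divide_right_mono power_mono) (auto simp: field_simps)
    finally have "exp (- ((D / \<sigma> + 1)\<^sup>2 / 2)) \<le> exp (- ((D + L)\<^sup>2 / (2 * \<sigma>\<^sup>2)))" by simp
    then have "L / \<sigma> * exp (- ((D / \<sigma> + 1)\<^sup>2 / 2)) / sqrt (2 * pi) \<le>
               L / \<sigma> * exp (- ((D + L)\<^sup>2 / (2 * \<sigma>\<^sup>2))) / sqrt (2 * pi)"
      using s L by (intro divide_right_mono mult_left_mono) auto
    also have "\<dots> = K * L" unfolding K_def by (simp add: field_simps)
    finally show ?thesis by (simp add: m)
  qed
  have "ennreal (min (w / \<sigma>) 1 * exp (- ((D / \<sigma> + 1)\<^sup>2 / 2)) / sqrt (2 * pi)) \<le> ennreal (K * L)"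
    using I3 by (rule ennreal_leI)
  also have "\<dots> \<le> (\<integral>\<^sup>+ y. ennreal (normal_density \<mu> \<sigma> y) * indicator {c - w..c + w} y \<partial>lborel)"
    using I1 I2 by simp
  finally show ?thesis .
qed


fun pre :: "real \<Rightarrow> real \<Rightarrow> real list \<Rightarrow> (real \<Rightarrow> real) \<Rightarrow> real" where
  "pre t0 x0 [] z = 1"
| "pre t0 x0 (p # ps) z = heat_kernel (p - t0) (z p - x0) * pre p (z p) ps z"

fun lT :: "real \<Rightarrow> real list \<Rightarrow> real" where
  "lT t0 [] = t0"
| "lT t0 (p # ps) = lT p ps"

fun lV :: "real \<Rightarrow> real list \<Rightarrow> (real \<Rightarrow> real) \<Rightarrow> real" where
  "lV x0 [] z = x0"
| "lV x0 (p # ps) z = lV (z p) ps z"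

lemma lT_eq: "lT t0 ps = (if ps = [] then t0 else last ps)"
  by (induction ps arbitrary: t0) auto

lemma lV_eq: "lV x0 ps z = (if ps = [] then x0 else z (last ps))"
  by (induction ps arbitrary: x0) auto

lemma pre_snoc: "pre t0 x0 (ps @ [p]) z = pre t0 x0 ps z * heat_kernel (p - lT t0 ps) (z p - lV x0 ps z)"
  by (induction ps arbitrary: t0 x0) auto

lemma pre_cong: "(\<And>q. q \<in> set ps \<Longrightarrow> z q = z' q) \<Longrightarrow> pre t0 x0 ps z = pre t0 x0 ps z'"
  by (induction ps arbitrary: t0 x0) auto

lemma lV_cong: "(\<And>q. q \<in> set ps \<Longrightarrow> z q = z' q) \<Longrightarrow> lV x0 ps z = lV x0 ps z'"
  by (induction ps arbitrary: x0) auto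

lemma pre_nonneg: "sorted_wrt (<) (t0 # ps) \<Longrightarrow> pre t0 x0 ps z \<ge> 0"
  by (induction ps arbitrary: t0 x0) (auto intro!: mult_nonneg_nonneg hk_nonneg)

lemma bb_prod:
  "(\<Prod>i<length ps + 1. heat_kernel ((l # ps @ [r]) ! (i+1) - (l # ps @ [r]) ! i)
        ((a # map y ps @ [b]) ! (i+1) - (a # map y ps @ [b]) ! i))
   = pre l a ps y * heat_kernel (r - lT l ps) (b - lV a ps y)"
proof (induction ps arbitrary: l a)
  case Nil
  then show ?case by simp
next
  case (Cons p ps)
  define F where "F = (\<lambda>i. heat_kernel ((l # (p # ps) @ [r]) ! (i+1) - (l # (p # ps) @ [r]) ! i)
        ((a # map y (p # ps) @ [b]) ! (i+1) - (a # map y (p # ps) @ [b]) ! i))"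
  have "(\<Prod>i<length (p # ps) + 1. F i) = (\<Prod>i<Suc (length ps + 1). F i)" by simp
  also have "\<dots> = F 0 * (\<Prod>i<length ps + 1. F (Suc i))"
    by (rule prod.lessThan_Suc_shift)
  also have "F 0 = heat_kernel (p - l) (y p - a)" by (simp add: F_def)
  also have "(\<Prod>i<length ps + 1. F (Suc i)) = (\<Prod>i<length ps + 1. heat_kernel ((p # ps @ [r]) ! (i+1) - (p # ps @ [r]) ! i)
        ((y p # map y ps @ [b]) ! (i+1) - (y p # map y ps @ [b]) ! i))"
    by (simp add: F_def)
  also have "\<dots> = pre p (y p) ps y * heat_kernel (r - lT p ps) (b - lV (y p) ps y)"
    by (rule Cons.IH)
  finally show ?case by (simp add: F_def)
qed

lemma bb_density_eq:
  "bb_density l r a b ps y = pre l a ps y * heat_kernel (r - lT l ps) (b - lV a ps y) / heat_kernel (r - l) (b - a)"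
  unfolding bb_density_def Let_def bb_prod ..


definition Sj :: "(nat \<times> real) set \<Rightarrow> nat \<Rightarrow> real set" where
  "Sj Q j = {p. (j, p) \<in> Q}"

definition Fj :: "real \<Rightarrow> real \<Rightarrow> (nat \<Rightarrow> real) \<Rightarrow> (nat \<Rightarrow> real) \<Rightarrow> (nat \<times> real) set \<Rightarrow> nat
    \<Rightarrow> (nat \<times> real \<Rightarrow> real) \<Rightarrow> real" where
  "Fj l r a b Q j x = pre l (a j) (sorted_list_of_set (Sj Q j)) (\<lambda>p. x (j, p)) *
     heat_kernel (r - lT l (sorted_list_of_set (Sj Q j))) (b j - lV (a j) (sorted_list_of_set (Sj Q j)) (\<lambda>p. x (j, p)))"

definition predP :: "real set \<Rightarrow> real \<Rightarrow> real \<Rightarrow> real" where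
  "predP P l p = Max (insert l {q \<in> P. q < p})"

definition DC :: "real set \<Rightarrow> (nat \<times> real) set \<Rightarrow> bool" where
  "DC P Q \<longleftrightarrow> (\<forall>j p q. (j, p) \<in> Q \<longrightarrow> q \<in> P \<longrightarrow> q < p \<longrightarrow> (j, q) \<in> Q)"

lemma sl_snoc:
  fixes A :: "real set"
  assumes "finite A" "p \<in> A" "\<forall>q\<in>A. q \<le> p"
  shows "sorted_list_of_set A = sorted_list_of_set (A - {p}) @ [p]"
proof -
  have c0: "card A > 0" using assms card_gt_0_iff by blast
  have c1: "card (A - {p}) = card A - 1" using assms by (simp add: card_Diff_singleton)
  have conj: "sorted_wrt (<) (sorted_list_of_set (A - {p}) @ [p]) \<and> set (sorted_list_of_set (A - {p}) @ [p]) = A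
     \<and> length (sorted_list_of_set (A - {p}) @ [p]) = card A"
    using assms c0 c1 by (auto simp: sorted_wrt_append less_le intro: sorted_list_of_set.strict_sorted_key_list_of_set)
  have U: "\<And>l. (sorted_wrt (<) l \<and> set l = A \<and> length l = card A) = (sorted_list_of_set A = l)"
    using sorted_list_of_set_unique[of A] assms(1) by auto
  show ?thesis using U[of "sorted_list_of_set (A - {p}) @ [p]"] conj by blast
qed

lemma lT_sl:
  fixes A :: "real set"
  assumes "finite A" "\<forall>q\<in>A. l < q"
  shows "lT l (sorted_list_of_set A) = Max (insert l A)"
proof (cases "A = {}")
  case True
  then show ?thesis by (simp add: lT_eq)
next
  case False
  have MA: "Max A \<in> A" "\<forall>q\<in>A. q \<le> Max A" using assms False by auto
  have "sorted_list_of_set A = sorted_list_of_set (A - {Max A}) @ [Max A]"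
    by (rule sl_snoc) (use assms MA in auto)
  then have "lT l (sorted_list_of_set A) = Max A" by (simp add: lT_eq)
  also have "\<dots> = Max (insert l A)" using assms MA False
    by (metis Max_insert max.absorb_iff2 less_imp_le)
  finally show ?thesis .
qed

lemma hk_meas:
  assumes [measurable]: "f \<in> borel_measurable M"
  shows "(\<lambda>x. heat_kernel t (f x)) \<in> borel_measurable M"
  unfolding heat_kernel_def by measurable

lemma pre_meas:
  "(\<And>q. q \<in> set ps \<Longrightarrow> (\<lambda>x. Z x q) \<in> borel_measurable M) \<Longrightarrow> X0 \<in> borel_measurable M \<Longrightarrow>
   (\<lambda>x. pre t0 (X0 x) ps (Z x)) \<in> borel_measurable M"
proof (induction ps arbitrary: t0 X0)
  case Nil
  then show ?case by simp
next
  case (Cons p ps)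
  have m1: "(\<lambda>x. Z x p) \<in> borel_measurable M" using Cons by auto
  have m2: "(\<lambda>x. pre p (Z x p) ps (Z x)) \<in> borel_measurable M"
    using Cons.IH[of "\<lambda>x. Z x p" p] Cons.prems m1 by auto
  have m3: "(\<lambda>x. heat_kernel (p - t0) (Z x p - X0 x)) \<in> borel_measurable M"
    by (intro hk_meas borel_measurable_diff m1 Cons.prems(2))
  show ?case using m2 m3 by simp
qed

lemma lV_meas:
  "(\<And>q. q \<in> set ps \<Longrightarrow> (\<lambda>x. Z x q) \<in> borel_measurable M) \<Longrightarrow> X0 \<in> borel_measurable M \<Longrightarrow>
   (\<lambda>x. lV (X0 x) ps (Z x)) \<in> borel_measurable M"
proof (induction ps arbitrary: X0)
  case Nil
  then show ?case by simp
next
  case (Cons p ps)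
  have m1: "(\<lambda>x. Z x p) \<in> borel_measurable M" using Cons by auto
  show ?case using Cons.IH[of "\<lambda>x. Z x p"] Cons.prems m1 by auto
qed

lemma coord_meas:
  "i \<in> I \<Longrightarrow> (\<lambda>x. x i) \<in> borel_measurable (PiM I (\<lambda>_. lborel))"
  using measurable_component_singleton[of i I "\<lambda>_. lborel"] by (simp add: measurable_lborel2)

lemma Sj_finite: "finite Q \<Longrightarrow> finite (Sj Q j)"
proof -
  assume "finite Q"
  moreover have "Sj Q j = snd ` (Q \<inter> {j} \<times> UNIV)" by (force simp: Sj_def)
  ultimately show ?thesis by simp
qed

lemma Fj_meas:
  assumes "finite Q" "Q \<subseteq> I"
  shows "(\<lambda>x. Fj l r a b Q j x) \<in> borel_measurable (PiM I (\<lambda>_. lborel))"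
proof -
  let ?qs = "sorted_list_of_set (Sj Q j)"
  have c: "\<And>q. q \<in> set ?qs \<Longrightarrow> (\<lambda>x. x (j, q)) \<in> borel_measurable (PiM I (\<lambda>_. lborel))"
    using assms Sj_finite[of Q j] by (intro coord_meas) (auto simp: Sj_def)
  have m1: "(\<lambda>x. pre l (a j) ?qs (\<lambda>p. x (j, p))) \<in> borel_measurable (PiM I (\<lambda>_. lborel))"
    by (rule pre_meas[of ?qs "\<lambda>x q. x (j, q)" "PiM I (\<lambda>_. lborel)" "\<lambda>_. a j" l]) (use c in auto)
  have m2: "(\<lambda>x. lV (a j) ?qs (\<lambda>p. x (j, p))) \<in> borel_measurable (PiM I (\<lambda>_. lborel))"
    by (rule lV_meas[of ?qs "\<lambda>x q. x (j, q)" "PiM I (\<lambda>_. lborel)" "\<lambda>_. a j"]) (use c in auto)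
  have m3: "(\<lambda>x. heat_kernel (r - lT l ?qs) (b j - lV (a j) ?qs (\<lambda>p. x (j, p)))) \<in> borel_measurable (PiM I (\<lambda>_. lborel))"
    by (intro hk_meas borel_measurable_diff borel_measurable_const m2)
  show ?thesis unfolding Fj_def by (intro borel_measurable_times m1 m3)
qed

lemma Fj_meas2:
  assumes "finite Q" "Q \<subseteq> I" "finite K"
  shows "(\<lambda>x. (\<Prod>j\<in>K. ennreal (Fj l r a b Q j x))) \<in> borel_measurable (PiM I (\<lambda>_. lborel))"
proof (intro borel_measurable_prod_ennreal)
  fix j
  show "(\<lambda>x. ennreal (Fj l r a b Q j x)) \<in> borel_measurable (PiM I (\<lambda>_. lborel))"
    using Fj_meas[OF assms(1,2)] by (rule measurable_compose[OF _ measurable_ennreal])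
qed

lemma ind_meas:
  fixes c :: "nat \<Rightarrow> real \<Rightarrow> real" and w :: real
  assumes "finite Q" "Q \<subseteq> I"
  shows "(\<lambda>x. (\<Prod>i\<in>Q. indicator {c (fst i) (snd i) - w..c (fst i) (snd i) + w} (x i) :: ennreal))
     \<in> borel_measurable (PiM I (\<lambda>_. lborel))"
proof (intro borel_measurable_prod_ennreal)
  fix i assume "i \<in> Q"
  then have "(\<lambda>x. x i) \<in> borel_measurable (PiM I (\<lambda>_. lborel))" using assms coord_meas by auto
  then show "(\<lambda>x. indicator {c (fst i) (snd i) - w..c (fst i) (snd i) + w} (x i) :: ennreal) \<in> borel_measurable (PiM I (\<lambda>_. lborel))"
    by (rule measurable_compose[OF _ borel_measurable_indicator]) (intro borel_closed closed_atLeastAtMost)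
qed

lemma integrand_meas:
  fixes c :: "nat \<Rightarrow> real \<Rightarrow> real" and w :: real
  assumes "finite Q" "Q \<subseteq> I" "finite K"
  shows "(\<lambda>x. (\<Prod>j\<in>K. ennreal (Fj l r a b Q j x)) * (\<Prod>i\<in>Q. indicator {c (fst i) (snd i) - w..c (fst i) (snd i) + w} (x i) :: ennreal))
     \<in> borel_measurable (PiM I (\<lambda>_. lborel))"
  by (intro borel_measurable_times_ennreal Fj_meas2 ind_meas assms)


interpretation lb_psf: product_sigma_finite "\<lambda>_::nat \<times> real. lborel"
  by standard

lemma main_lb:
  fixes K :: "nat set" and P :: "real set" and l r w :: real and a b :: "nat \<Rightarrow> real"
    and c :: "nat \<Rightarrow> real \<Rightarrow> real" and \<rho> :: "real \<Rightarrow> real"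
  assumes K: "finite K" and P: "finite P" and lr: "l < r" and Psub: "P \<subseteq> {l<..<r}" and w: "w > 0"
    and cl: "\<And>j. j \<in> K \<Longrightarrow> c j l = a j"
    and step: "\<And>j p v. j \<in> K \<Longrightarrow> p \<in> P \<Longrightarrow> \<bar>v - c j (predP P l p)\<bar> \<le> w \<Longrightarrow>
      ennreal (\<rho> p) \<le> (\<integral>\<^sup>+y. ennreal (normal_density (v + (p - predP P l p) / ((p - predP P l p) + (r - p)) * (b j - v))
          (sqrt ((p - predP P l p) * (r - p) / ((p - predP P l p) + (r - p)))) y)
        * indicator {c j p - w..c j p + w} y \<partial>lborel)"
  shows "card Q = n \<Longrightarrow> Q \<subseteq> K \<times> P \<Longrightarrow> DC P Q \<Longrightarrow>
    (\<Prod>j\<in>K. ennreal (heat_kernel (r - l) (b j - a j))) * (\<Prod>i\<in>Q. ennreal (\<rho> (snd i)))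
    \<le> (\<integral>\<^sup>+x. (\<Prod>j\<in>K. ennreal (Fj l r a b Q j x)) *
          (\<Prod>i\<in>Q. indicator {c (fst i) (snd i) - w..c (fst i) (snd i) + w} (x i)) \<partial>PiM Q (\<lambda>_. lborel))"
proof (induction n arbitrary: Q)
  case 0
  have "finite Q" using 0 finite_subset[OF _ finite_cartesian_product[OF K P]] by blast
  then have Q: "Q = {}" using 0 by simp
  have "Sj {} j = {}" for j by (simp add: Sj_def)
  then show ?case using Q by (simp add: Fj_def PiM_empty nn_integral_count_space_finite lT_eq lV_eq)
next
  case (Suc n)
  have finQ: "finite Q" using Suc finite_subset[OF _ finite_cartesian_product[OF K P]] by blast
  then obtain i0 where i0: "i0 \<in> Q" using Suc by (metis card.empty card_gt_0_iff zero_less_Suc ex_in_conv)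
  define j0 where "j0 = fst i0"
  have SjP: "Sj Q j \<subseteq> P" for j using Suc.prems(2) by (auto simp: Sj_def)
  have finS: "finite (Sj Q j)" for j using SjP P finite_subset by blast
  have neS: "Sj Q j0 \<noteq> {}" using i0 by (cases i0) (auto simp: Sj_def j0_def)
  define p0 where "p0 = Max (Sj Q j0)"
  have p0S: "p0 \<in> Sj Q j0" using neS finS p0_def by simp
  have p0max: "\<forall>q\<in>Sj Q j0. q \<le> p0" using finS p0_def by simp
  have i0Q: "(j0, p0) \<in> Q" using p0S by (simp add: Sj_def)
  have j0K: "j0 \<in> K" and p0P: "p0 \<in> P" using i0Q Suc.prems(2) by auto
  have lp0: "l < p0" and p0r: "p0 < r" using p0P Psub by auto
  define Q' where "Q' = Q - {(j0, p0)}"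
  have QQ': "Q = insert (j0, p0) Q'" and notin: "(j0, p0) \<notin> Q'" using i0Q by (auto simp: Q'_def)
  have finQ': "finite Q'" using finQ by (simp add: Q'_def)
  have cardQ': "card Q' = n" using Suc.prems(1) finQ i0Q by (simp add: Q'_def)
  have subQ': "Q' \<subseteq> K \<times> P" using Suc.prems(2) by (auto simp: Q'_def)
  have DCQ': "DC P Q'"
    unfolding DC_def
  proof (intro allI impI)
    fix j p q assume a1: "(j, p) \<in> Q'" and a2: "q \<in> P" and a3: "q < p"
    have "(j, q) \<in> Q" using Suc.prems(3) a1 a2 a3 by (auto simp: DC_def Q'_def)
    moreover have "(j, q) \<noteq> (j0, p0)"
    proof
      assume "(j, q) = (j0, p0)"
      then have "p \<in> Sj Q j0" "p0 < p" using a1 a3 by (auto simp: Sj_def Q'_def)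
      then show False using p0max by force
    qed
    ultimately show "(j, q) \<in> Q'" by (simp add: Q'_def)
  qed
  have SQ'j0: "Sj Q' j0 = {q \<in> P. q < p0}"
  proof
    show "Sj Q' j0 \<subseteq> {q \<in> P. q < p0}"
      using p0max SjP by (force simp: Sj_def Q'_def)
    show "{q \<in> P. q < p0} \<subseteq> Sj Q' j0"
      using Suc.prems(3) i0Q by (auto simp: Sj_def Q'_def DC_def)
  qed
  have SQ'j: "j \<noteq> j0 \<Longrightarrow> Sj Q' j = Sj Q j" for j by (auto simp: Sj_def Q'_def)
  have SQ'j0': "Sj Q' j0 = Sj Q j0 - {p0}" by (auto simp: Sj_def Q'_def)
  define qs where "qs = sorted_list_of_set (Sj Q' j0)"
  have slQ: "sorted_list_of_set (Sj Q j0) = qs @ [p0]"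
    unfolding qs_def SQ'j0' by (rule sl_snoc[OF finS p0S p0max])
  define t where "t = predP P l p0"
  have finS': "finite (Sj Q' j0)" using finQ' Sj_finite by blast
  have t_eq: "lT l qs = t"
    unfolding qs_def t_def predP_def SQ'j0
    by (rule lT_sl) (use P Psub in auto)
  have lt: "l \<le> t" unfolding t_def predP_def using P by simp
  have tp0: "t < p0" unfolding t_def predP_def using P lp0 by simp
  have p0_notin: "p0 \<notin> set qs" using finS' by (simp add: qs_def SQ'j0)
  define J where "J = (\<lambda>i::nat \<times> real. {c (fst i) (snd i) - w..c (fst i) (snd i) + w})"
  define G where "G = (\<lambda>x. (\<Prod>j\<in>K. ennreal (Fj l r a b Q' j x)) * (\<Prod>i\<in>Q'. indicator (J i) (x i) :: ennreal))"
  define vf where "vf = (\<lambda>x::nat \<times> real \<Rightarrow> real. lV (a j0) qs (\<lambda>p. x (j0, p)))"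
  define \<mu>f where "\<mu>f = (\<lambda>x. vf x + (p0 - t) / ((p0 - t) + (r - p0)) * (b j0 - vf x))"
  define \<sigma> where "\<sigma> = sqrt ((p0 - t) * (r - p0) / ((p0 - t) + (r - p0)))"
  have Fj_other: "Fj l r a b Q j (x((j0, p0) := y)) = Fj l r a b Q' j x" if "j \<noteq> j0" for j x y
  proof -
    have "(\<lambda>p. (x((j0, p0) := y)) (j, p)) = (\<lambda>p. x (j, p))" using that by auto
    then show ?thesis unfolding Fj_def using SQ'j[OF that] by simp
  qed
  have Fj_j0: "Fj l r a b Q j0 (x((j0, p0) := y)) = Fj l r a b Q' j0 x * normal_density (\<mu>f x) \<sigma> y" for x y
  proof -
    define z where "z = (\<lambda>p. x (j0, p))"
    have z': "(\<lambda>p. (x((j0, p0) := y)) (j0, p)) = z(p0 := y)" by (auto simp: z_def)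
    have pc: "pre l (a j0) qs (z(p0 := y)) = pre l (a j0) qs z"
      by (rule pre_cong) (use p0_notin in auto)
    have vc: "lV (a j0) qs (z(p0 := y)) = vf x"
      unfolding vf_def z_def[symmetric] by (rule lV_cong) (use p0_notin in auto)
    have "Fj l r a b Q j0 (x((j0, p0) := y)) =
        pre l (a j0) qs z * (heat_kernel (p0 - t) (y - vf x) * heat_kernel (r - p0) (b j0 - y))"
      unfolding Fj_def slQ z' pre_snoc using pc vc t_eq by (simp add: lT_eq lV_eq)
    also have "\<dots> = pre l (a j0) qs z * (heat_kernel ((p0 - t) + (r - p0)) (b j0 - vf x) * normal_density (\<mu>f x) \<sigma> y)"
      unfolding \<mu>f_def \<sigma>_def by (subst ck_identity) (use tp0 p0r in auto)
    also have "(p0 - t) + (r - p0) = r - t" by simp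
    also have "pre l (a j0) qs z * (heat_kernel (r - t) (b j0 - vf x) * normal_density (\<mu>f x) \<sigma> y)
        = Fj l r a b Q' j0 x * normal_density (\<mu>f x) \<sigma> y"
      unfolding Fj_def qs_def[symmetric] z_def[symmetric] vf_def t_eq[symmetric] by simp
    finally show ?thesis .
  qed
  have key: "(\<Prod>j\<in>K. ennreal (Fj l r a b Q j (x((j0, p0) := y)))) * (\<Prod>i\<in>Q. indicator (J i) ((x((j0, p0) := y)) i) :: ennreal)
      = G x * (ennreal (normal_density (\<mu>f x) \<sigma> y) * indicator (J (j0, p0)) y)" for x y
  proof -
    have A: "(\<Prod>j\<in>K. ennreal (Fj l r a b Q j (x((j0, p0) := y)))) =
        ennreal (normal_density (\<mu>f x) \<sigma> y) * (\<Prod>j\<in>K. ennreal (Fj l r a b Q' j x))"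
    proof -
      have "(\<Prod>j\<in>K. ennreal (Fj l r a b Q j (x((j0, p0) := y)))) =
          ennreal (Fj l r a b Q j0 (x((j0, p0) := y))) * (\<Prod>j\<in>K - {j0}. ennreal (Fj l r a b Q j (x((j0, p0) := y))))"
        using K j0K by (simp add: prod.remove)
      also have "(\<Prod>j\<in>K - {j0}. ennreal (Fj l r a b Q j (x((j0, p0) := y)))) = (\<Prod>j\<in>K - {j0}. ennreal (Fj l r a b Q' j x))"
        by (rule prod.cong) (auto simp: Fj_other)
      also have "ennreal (Fj l r a b Q j0 (x((j0, p0) := y))) = ennreal (Fj l r a b Q' j0 x) * ennreal (normal_density (\<mu>f x) \<sigma> y)"
        by (simp add: Fj_j0 ennreal_mult'')
      finally have X: "(\<Prod>j\<in>K. ennreal (Fj l r a b Q j (x((j0, p0) := y)))) = ennreal (Fj l r a b Q' j0 x) * ennreal (normal_density (\<mu>f x) \<sigma> y) * (\<Prod>j\<in>K - {j0}. ennreal (Fj l r a b Q' j x))" .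
      have Y: "(\<Prod>j\<in>K. ennreal (Fj l r a b Q' j x)) = ennreal (Fj l r a b Q' j0 x) * (\<Prod>j\<in>K - {j0}. ennreal (Fj l r a b Q' j x))"
        using K j0K by (simp add: prod.remove)
      show ?thesis unfolding X Y by (simp only: ac_simps)
    qed
    have B: "(\<Prod>i\<in>Q. indicator (J i) ((x((j0, p0) := y)) i) :: ennreal) =
        indicator (J (j0, p0)) y * (\<Prod>i\<in>Q'. indicator (J i) (x i))"
    proof -
      have "(\<Prod>i\<in>Q. indicator (J i) ((x((j0, p0) := y)) i) :: ennreal) =
          indicator (J (j0, p0)) y * (\<Prod>i\<in>Q'. indicator (J i) ((x((j0, p0) := y)) i))"
        unfolding QQ' using finQ' notin by simp
      also have "(\<Prod>i\<in>Q'. indicator (J i) ((x((j0, p0) := y)) i) :: ennreal) = (\<Prod>i\<in>Q'. indicator (J i) (x i))"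
        by (rule prod.cong) (use notin in auto)
      finally show ?thesis .
    qed
    show ?thesis unfolding A B G_def by (simp add: ac_simps)
  qed
  have measf: "(\<lambda>x. (\<Prod>j\<in>K. ennreal (Fj l r a b Q j x)) * (\<Prod>i\<in>Q. indicator (J i) (x i) :: ennreal))
      \<in> borel_measurable (PiM (insert (j0, p0) Q') (\<lambda>_. lborel))"
    unfolding J_def QQ'[symmetric] by (rule integrand_meas[OF finQ order.refl K])
  have measG: "G \<in> borel_measurable (PiM Q' (\<lambda>_. lborel))"
    unfolding G_def J_def by (rule integrand_meas[OF finQ' order.refl K])
  have stepx: "G x * ennreal (\<rho> p0) \<le> G x * (\<integral>\<^sup>+y. ennreal (normal_density (\<mu>f x) \<sigma> y) * indicator (J (j0, p0)) y \<partial>lborel)" for x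
  proof (cases "qs = [] \<or> x (j0, t) \<in> J (j0, t)")
    case True
    have "\<bar>vf x - c j0 t\<bar> \<le> w"
    proof (cases "qs = []")
      case True
      then have "t = l" "vf x = a j0" using t_eq by (auto simp: vf_def lV_eq lT_eq)
      then show ?thesis using cl[OF j0K] w by simp
    next
      case False
      then have "vf x = x (j0, t)" using t_eq by (auto simp: vf_def lV_eq lT_eq)
      moreover have "x (j0, t) \<in> J (j0, t)" using True False by auto
      ultimately show ?thesis by (auto simp: J_def abs_le_iff)
    qed
    then have "\<bar>vf x - c j0 (predP P l p0)\<bar> \<le> w" by (simp add: t_def)
    from step[OF j0K p0P this]
    have "ennreal (\<rho> p0) \<le> (\<integral>\<^sup>+y. ennreal (normal_density (\<mu>f x) \<sigma> y) * indicator (J (j0, p0)) y \<partial>lborel)"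
      unfolding \<mu>f_def \<sigma>_def J_def t_def by simp
    then show ?thesis by (rule mult_left_mono) simp
  next
    case False
    then have "t \<in> set qs" using t_eq by (auto simp: lT_eq)
    then have "(j0, t) \<in> Q'" using finS' by (auto simp: qs_def Sj_def)
    moreover have "indicator (J (j0, t)) (x (j0, t)) = (0 :: ennreal)" using False by simp
    ultimately have "(\<Prod>i\<in>Q'. indicator (J i) (x i) :: ennreal) = 0"
      using finQ' by (intro prod_zero) (auto intro!: bexI[of _ "(j0, t)"])
    then have "G x = 0" by (simp add: G_def)
    then show ?thesis by simp
  qed
  have "(\<integral>\<^sup>+x. (\<Prod>j\<in>K. ennreal (Fj l r a b Q j x)) * (\<Prod>i\<in>Q. indicator (J i) (x i)) \<partial>PiM Q (\<lambda>_. lborel))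
      = (\<integral>\<^sup>+x. (\<integral>\<^sup>+y. (\<Prod>j\<in>K. ennreal (Fj l r a b Q j (x((j0, p0) := y)))) * (\<Prod>i\<in>Q. indicator (J i) ((x((j0, p0) := y)) i)) \<partial>lborel) \<partial>PiM Q' (\<lambda>_. lborel))"
    using lb_psf.product_nn_integral_insert[OF finQ' notin measf] by (simp only: QQ'[symmetric])
  also have "\<dots> = (\<integral>\<^sup>+x. G x * (\<integral>\<^sup>+y. ennreal (normal_density (\<mu>f x) \<sigma> y) * indicator (J (j0, p0)) y \<partial>lborel) \<partial>PiM Q' (\<lambda>_. lborel))"
    unfolding key by (intro nn_integral_cong nn_integral_cmult) (auto simp: J_def)
  also have "\<dots> \<ge> (\<integral>\<^sup>+x. G x * ennreal (\<rho> p0) \<partial>PiM Q' (\<lambda>_. lborel))"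
    by (intro nn_integral_mono stepx)
  also have "(\<integral>\<^sup>+x. G x * ennreal (\<rho> p0) \<partial>PiM Q' (\<lambda>_. lborel)) = (\<integral>\<^sup>+x. G x \<partial>PiM Q' (\<lambda>_. lborel)) * ennreal (\<rho> p0)"
    by (rule nn_integral_multc[OF measG])
  finally have I1: "(\<integral>\<^sup>+x. G x \<partial>PiM Q' (\<lambda>_. lborel)) * ennreal (\<rho> p0) \<le>
      (\<integral>\<^sup>+x. (\<Prod>j\<in>K. ennreal (Fj l r a b Q j x)) * (\<Prod>i\<in>Q. indicator (J i) (x i)) \<partial>PiM Q (\<lambda>_. lborel))" .
  have IH: "(\<Prod>j\<in>K. ennreal (heat_kernel (r - l) (b j - a j))) * (\<Prod>i\<in>Q'. ennreal (\<rho> (snd i)))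
      \<le> (\<integral>\<^sup>+x. G x \<partial>PiM Q' (\<lambda>_. lborel))"
    unfolding G_def J_def by (rule Suc.IH[OF cardQ' subQ' DCQ'])
  have "(\<Prod>j\<in>K. ennreal (heat_kernel (r - l) (b j - a j))) * (\<Prod>i\<in>Q. ennreal (\<rho> (snd i)))
      = ((\<Prod>j\<in>K. ennreal (heat_kernel (r - l) (b j - a j))) * (\<Prod>i\<in>Q'. ennreal (\<rho> (snd i)))) * ennreal (\<rho> p0)"
    unfolding QQ' using finQ' notin by (simp add: ac_simps)
  also have "\<dots> \<le> (\<integral>\<^sup>+x. G x \<partial>PiM Q' (\<lambda>_. lborel)) * ennreal (\<rho> p0)"
    by (rule mult_right_mono[OF IH]) simp
  also note I1
  finally show ?case unfolding J_def .
qed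


lemma main_mass:
  fixes K :: "nat set" and l r :: real and a b :: "nat \<Rightarrow> real"
  assumes K: "finite K" and lr: "l < r"
  shows "card Q = n \<Longrightarrow> finite Q \<Longrightarrow> Q \<subseteq> K \<times> {l<..<r} \<Longrightarrow>
    (\<integral>\<^sup>+x. (\<Prod>j\<in>K. ennreal (Fj l r a b Q j x)) \<partial>PiM Q (\<lambda>_. lborel))
    = (\<Prod>j\<in>K. ennreal (heat_kernel (r - l) (b j - a j)))"
proof (induction n arbitrary: Q)
  case 0
  then have Q: "Q = {}" by simp
  have "Sj {} j = {}" for j by (simp add: Sj_def)
  then show ?case using Q by (simp add: Fj_def PiM_empty nn_integral_count_space_finite lT_eq lV_eq)
next
  case (Suc n)
  have finQ: "finite Q" using Suc by blast
  then obtain i0 where i0: "i0 \<in> Q" using Suc by (metis card.empty card_gt_0_iff zero_less_Suc ex_in_conv)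
  define j0 where "j0 = fst i0"
  have finS: "finite (Sj Q j)" for j using finQ Sj_finite by blast
  have neS: "Sj Q j0 \<noteq> {}" using i0 by (cases i0) (auto simp: Sj_def j0_def)
  define p0 where "p0 = Max (Sj Q j0)"
  have p0S: "p0 \<in> Sj Q j0" using neS finS p0_def by simp
  have p0max: "\<forall>q\<in>Sj Q j0. q \<le> p0" using finS p0_def by simp
  have i0Q: "(j0, p0) \<in> Q" using p0S by (simp add: Sj_def)
  have j0K: "j0 \<in> K" and lp0: "l < p0" and p0r: "p0 < r" using i0Q Suc.prems(3) by auto
  define Q' where "Q' = Q - {(j0, p0)}"
  have QQ': "Q = insert (j0, p0) Q'" and notin: "(j0, p0) \<notin> Q'" using i0Q by (auto simp: Q'_def)
  have finQ': "finite Q'" using finQ by (simp add: Q'_def)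
  have cardQ': "card Q' = n" using Suc.prems(1) finQ i0Q by (simp add: Q'_def)
  have subQ': "Q' \<subseteq> K \<times> {l<..<r}" using Suc.prems(3) by (auto simp: Q'_def)
  have SQ'j: "j \<noteq> j0 \<Longrightarrow> Sj Q' j = Sj Q j" for j by (auto simp: Sj_def Q'_def)
  have SQ'j0': "Sj Q' j0 = Sj Q j0 - {p0}" by (auto simp: Sj_def Q'_def)
  have Sgt: "\<forall>q\<in>Sj Q' j0. l < q \<and> q < p0"
    using Suc.prems(3) p0max by (force simp: Sj_def Q'_def)
  define qs where "qs = sorted_list_of_set (Sj Q' j0)"
  have slQ: "sorted_list_of_set (Sj Q j0) = qs @ [p0]"
    unfolding qs_def SQ'j0' by (rule sl_snoc[OF finS p0S p0max])
  have finS': "finite (Sj Q' j0)" using finQ' Sj_finite by blast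
  define t where "t = Max (insert l (Sj Q' j0))"
  have t_eq: "lT l qs = t"
    unfolding qs_def t_def by (rule lT_sl) (use finS' Sgt in auto)
  have tp0: "t < p0" unfolding t_def using finS' Sgt lp0 by simp
  have p0_notin: "p0 \<notin> set qs" using finS' by (simp add: qs_def SQ'j0')
  define G where "G = (\<lambda>x. (\<Prod>j\<in>K. ennreal (Fj l r a b Q' j x)))"
  define vf where "vf = (\<lambda>x::nat \<times> real \<Rightarrow> real. lV (a j0) qs (\<lambda>p. x (j0, p)))"
  define \<mu>f where "\<mu>f = (\<lambda>x. vf x + (p0 - t) / ((p0 - t) + (r - p0)) * (b j0 - vf x))"
  define \<sigma> where "\<sigma> = sqrt ((p0 - t) * (r - p0) / ((p0 - t) + (r - p0)))"
  have \<sigma>pos: "\<sigma> > 0" unfolding \<sigma>_def using tp0 p0r by simp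
  have Fj_other: "Fj l r a b Q j (x((j0, p0) := y)) = Fj l r a b Q' j x" if "j \<noteq> j0" for j x y
  proof -
    have "(\<lambda>p. (x((j0, p0) := y)) (j, p)) = (\<lambda>p. x (j, p))" using that by auto
    then show ?thesis unfolding Fj_def using SQ'j[OF that] by simp
  qed
  have Fj_j0: "Fj l r a b Q j0 (x((j0, p0) := y)) = Fj l r a b Q' j0 x * normal_density (\<mu>f x) \<sigma> y" for x y
  proof -
    define z where "z = (\<lambda>p. x (j0, p))"
    have z': "(\<lambda>p. (x((j0, p0) := y)) (j0, p)) = z(p0 := y)" by (auto simp: z_def)
    have pc: "pre l (a j0) qs (z(p0 := y)) = pre l (a j0) qs z"
      by (rule pre_cong) (use p0_notin in auto)
    have vc: "lV (a j0) qs (z(p0 := y)) = vf x"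
      unfolding vf_def z_def[symmetric] by (rule lV_cong) (use p0_notin in auto)
    have "Fj l r a b Q j0 (x((j0, p0) := y)) =
        pre l (a j0) qs z * (heat_kernel (p0 - t) (y - vf x) * heat_kernel (r - p0) (b j0 - y))"
      unfolding Fj_def slQ z' pre_snoc using pc vc t_eq by (simp add: lT_eq lV_eq)
    also have "\<dots> = pre l (a j0) qs z * (heat_kernel ((p0 - t) + (r - p0)) (b j0 - vf x) * normal_density (\<mu>f x) \<sigma> y)"
      unfolding \<mu>f_def \<sigma>_def by (subst ck_identity) (use tp0 p0r in auto)
    also have "(p0 - t) + (r - p0) = r - t" by simp
    also have "pre l (a j0) qs z * (heat_kernel (r - t) (b j0 - vf x) * normal_density (\<mu>f x) \<sigma> y)
        = Fj l r a b Q' j0 x * normal_density (\<mu>f x) \<sigma> y"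
      unfolding Fj_def qs_def[symmetric] z_def[symmetric] vf_def t_eq[symmetric] by simp
    finally show ?thesis .
  qed
  have key: "(\<Prod>j\<in>K. ennreal (Fj l r a b Q j (x((j0, p0) := y))))
      = G x * ennreal (normal_density (\<mu>f x) \<sigma> y)" for x y
  proof -
    have "(\<Prod>j\<in>K. ennreal (Fj l r a b Q j (x((j0, p0) := y)))) =
        ennreal (Fj l r a b Q j0 (x((j0, p0) := y))) * (\<Prod>j\<in>K - {j0}. ennreal (Fj l r a b Q j (x((j0, p0) := y))))"
      using K j0K by (simp add: prod.remove)
    also have "(\<Prod>j\<in>K - {j0}. ennreal (Fj l r a b Q j (x((j0, p0) := y)))) = (\<Prod>j\<in>K - {j0}. ennreal (Fj l r a b Q' j x))"
      by (rule prod.cong) (auto simp: Fj_other)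
    also have "ennreal (Fj l r a b Q j0 (x((j0, p0) := y))) = ennreal (Fj l r a b Q' j0 x) * ennreal (normal_density (\<mu>f x) \<sigma> y)"
      by (simp add: Fj_j0 ennreal_mult'')
    finally have X: "(\<Prod>j\<in>K. ennreal (Fj l r a b Q j (x((j0, p0) := y)))) = ennreal (Fj l r a b Q' j0 x) * ennreal (normal_density (\<mu>f x) \<sigma> y) * (\<Prod>j\<in>K - {j0}. ennreal (Fj l r a b Q' j x))" .
    have Y: "(\<Prod>j\<in>K. ennreal (Fj l r a b Q' j x)) = ennreal (Fj l r a b Q' j0 x) * (\<Prod>j\<in>K - {j0}. ennreal (Fj l r a b Q' j x))"
      using K j0K by (simp add: prod.remove)
    show ?thesis unfolding X G_def Y by (simp only: ac_simps)
  qed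
  have measf: "(\<lambda>x. (\<Prod>j\<in>K. ennreal (Fj l r a b Q j x)))
      \<in> borel_measurable (PiM (insert (j0, p0) Q') (\<lambda>_. lborel))"
    unfolding QQ'[symmetric] by (rule Fj_meas2[OF finQ order.refl K])
  have "(\<integral>\<^sup>+x. (\<Prod>j\<in>K. ennreal (Fj l r a b Q j x)) \<partial>PiM Q (\<lambda>_. lborel))
      = (\<integral>\<^sup>+x. (\<integral>\<^sup>+y. (\<Prod>j\<in>K. ennreal (Fj l r a b Q j (x((j0, p0) := y)))) \<partial>lborel) \<partial>PiM Q' (\<lambda>_. lborel))"
    using lb_psf.product_nn_integral_insert[OF finQ' notin measf] by (simp only: QQ'[symmetric])
  also have "\<dots> = (\<integral>\<^sup>+x. G x * (\<integral>\<^sup>+y. ennreal (normal_density (\<mu>f x) \<sigma> y) \<partial>lborel) \<partial>PiM Q' (\<lambda>_. lborel))"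
    unfolding key by (intro nn_integral_cong nn_integral_cmult) auto
  also have "\<dots> = (\<integral>\<^sup>+x. G x \<partial>PiM Q' (\<lambda>_. lborel))"
    using nd_integral_1[OF \<sigma>pos] by simp
  also have "\<dots> = (\<Prod>j\<in>K. ennreal (heat_kernel (r - l) (b j - a j)))"
    unfolding G_def by (rule Suc.IH[OF cardQ' finQ' subQ'])
  finally show ?case .
qed


lemma W_sets: "finite P \<Longrightarrow> W_event k P g \<in> sets (PiM ({1..k} \<times> P) (\<lambda>_. lborel))"
  unfolding W_event_def by measurable

lemma H_sets: assumes "1 \<le> k" "finite P" shows "H_event k P g \<mu> lam0 lam1 T \<in> sets (PiM ({1..k} \<times> P) (\<lambda>_. lborel))"
  unfolding H_event_def using assms(2) apply measurable
  subgoal using assms by auto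
  subgoal by simp
  done

lemma Sj_prod: "j \<in> K \<Longrightarrow> Sj (K \<times> P) j = P"
  by (auto simp: Sj_def)

lemma Fj_nonneg:
  assumes "finite P" "P \<subseteq> {l<..<r}" "l < r" "j \<in> K"
  shows "Fj l r a b (K \<times> P) j x \<ge> 0"
proof -
  have s: "sorted_wrt (<) (l # sorted_list_of_set P)" using assms
    by (auto simp: sorted_list_of_set.strict_sorted_key_list_of_set)
  have "lT l (sorted_list_of_set P) = Max (insert l P)" using assms by (intro lT_sl) auto
  also have "\<dots> \<le> r" using assms by auto
  finally have "r - lT l (sorted_list_of_set P) \<ge> 0" by simp
  then show ?thesis unfolding Fj_def Sj_prod[OF assms(4)]
    by (intro mult_nonneg_nonneg pre_nonneg[OF s] hk_nonneg)
qed

lemma bb_Fj: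
  "j \<in> K \<Longrightarrow> bb_density l r (a j) (b j) (sorted_list_of_set P) (\<lambda>p. x (j, p)) =
     Fj l r a b (K \<times> P) j x / heat_kernel (r - l) (b j - a j)"
  unfolding bb_density_eq Fj_def Sj_prod by simp

lemma dens_eq:
  assumes "finite P" "P \<subseteq> {l<..<r}" "l < r" "finite K"
  shows "(\<lambda>x. ennreal (\<Prod>j\<in>K. bb_density l r (a j) (b j) (sorted_list_of_set P) (\<lambda>p. x (j, p))))
    = (\<lambda>x. (\<Prod>j\<in>K. ennreal (Fj l r a b (K \<times> P) j x)) * (\<Prod>j\<in>K. ennreal (1 / heat_kernel (r - l) (b j - a j))))"
proof
  fix x
  have h: "heat_kernel (r - l) (b j - a j) > 0" for j using assms hk_pos by simp
  have "ennreal (\<Prod>j\<in>K. bb_density l r (a j) (b j) (sorted_list_of_set P) (\<lambda>p. x (j, p)))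
      = (\<Prod>j\<in>K. ennreal (Fj l r a b (K \<times> P) j x * (1 / heat_kernel (r - l) (b j - a j))))"
    using Fj_nonneg[OF assms(1-3)] h
    by (subst prod_ennreal[symmetric]) (auto intro!: prod.cong simp: bb_Fj less_imp_le)
  also have "\<dots> = (\<Prod>j\<in>K. ennreal (Fj l r a b (K \<times> P) j x) * ennreal (1 / heat_kernel (r - l) (b j - a j)))"
    using Fj_nonneg[OF assms(1-3)] h by (intro prod.cong refl ennreal_mult) (auto simp: less_imp_le)
  also have "\<dots> = (\<Prod>j\<in>K. ennreal (Fj l r a b (K \<times> P) j x)) * (\<Prod>j\<in>K. ennreal (1 / heat_kernel (r - l) (b j - a j)))"
    by (rule prod.distrib)
  finally show "ennreal (\<Prod>j\<in>K. bb_density l r (a j) (b j) (sorted_list_of_set P) (\<lambda>p. x (j, p))) =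
      (\<Prod>j\<in>K. ennreal (Fj l r a b (K \<times> P) j x)) * (\<Prod>j\<in>K. ennreal (1 / heat_kernel (r - l) (b j - a j)))" .
qed

lemma const_cancel:
  assumes "l < r" "finite K"
  shows "(\<Prod>j\<in>K. ennreal (heat_kernel (r - l) (b j - a j))) * (\<Prod>j\<in>K. ennreal (1 / heat_kernel (r - l) (b j - a j))) = 1"
proof -
  have h: "heat_kernel (r - l) (b j - a j) > 0" for j using assms hk_pos by simp
  have "(\<Prod>j\<in>K. ennreal (heat_kernel (r - l) (b j - a j))) * (\<Prod>j\<in>K. ennreal (1 / heat_kernel (r - l) (b j - a j)))
      = (\<Prod>j\<in>K. ennreal (heat_kernel (r - l) (b j - a j)) * ennreal (1 / heat_kernel (r - l) (b j - a j)))"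
    by (rule prod.distrib[symmetric])
  also have "\<dots> = (\<Prod>j\<in>K. 1)"
  proof (intro prod.cong refl)
    fix j
    have h': "heat_kernel (r - l) (b j - a j) \<noteq> 0" using h[of j] by simp
    show "ennreal (heat_kernel (r - l) (b j - a j)) * ennreal (1 / heat_kernel (r - l) (b j - a j)) = 1"
      using h[of j] h' by (simp add: ennreal_mult[symmetric] less_imp_le)
  qed
  finally show ?thesis by simp
qed

lemma fdd_space:
  assumes "finite P" "P \<subseteq> {l<..<r}" "l < r"
  shows "emeasure (free_fdd k l r am ap P) (space (free_fdd k l r am ap P)) = 1"
proof -
  let ?K = "{1..k} :: nat set"
  let ?M = "PiM (?K \<times> P) (\<lambda>_. lborel)"
  let ?C = "(\<Prod>j\<in>?K. ennreal (1 / heat_kernel (r - l) (ap j - am j)))"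
  have fin: "finite (?K \<times> P)" using assms by simp
  have meas: "(\<lambda>x. (\<Prod>j\<in>?K. ennreal (Fj l r am ap (?K \<times> P) j x))) \<in> borel_measurable ?M"
    by (rule Fj_meas2[OF fin order.refl]) simp
  have "emeasure (free_fdd k l r am ap P) (space (free_fdd k l r am ap P))
      = (\<integral>\<^sup>+x. (\<Prod>j\<in>?K. ennreal (Fj l r am ap (?K \<times> P) j x)) * ?C * indicator (space ?M) x \<partial>?M)"
    unfolding free_fdd_def dens_eq[OF assms finite_atLeastAtMost] space_density
    by (rule emeasure_density[OF borel_measurable_times_ennreal[OF meas measurable_const] sets.top]) simp
  also have "\<dots> = (\<integral>\<^sup>+x. (\<Prod>j\<in>?K. ennreal (Fj l r am ap (?K \<times> P) j x)) * ?C \<partial>?M)"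
    by (rule nn_integral_cong) simp
  also have "\<dots> = (\<integral>\<^sup>+x. (\<Prod>j\<in>?K. ennreal (Fj l r am ap (?K \<times> P) j x)) \<partial>?M) * ?C"
    by (rule nn_integral_multc[OF meas])
  also have "\<dots> = (\<Prod>j\<in>?K. ennreal (heat_kernel (r - l) (ap j - am j))) * ?C"
    by (subst main_mass[OF finite_atLeastAtMost assms(3) refl fin]) (use assms in auto)
  also have "\<dots> = 1" by (rule const_cancel[OF assms(3)]) simp
  finally show ?thesis .
qed

lemma fdd_lower:
  fixes c :: "nat \<Rightarrow> real \<Rightarrow> real" and \<rho> :: "real \<Rightarrow> real" and w :: real
  assumes P: "finite P" and Psub: "P \<subseteq> {l<..<r}" and lr: "l < r" and w: "w > 0"
    and cl: "\<And>j. j \<in> {1..k} \<Longrightarrow> c j l = am j"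
    and step: "\<And>j p v. j \<in> {1..k} \<Longrightarrow> p \<in> P \<Longrightarrow> \<bar>v - c j (predP P l p)\<bar> \<le> w \<Longrightarrow>
      ennreal (\<rho> p) \<le> (\<integral>\<^sup>+y. ennreal (normal_density (v + (p - predP P l p) / ((p - predP P l p) + (r - p)) * (ap j - v))
          (sqrt ((p - predP P l p) * (r - p) / ((p - predP P l p) + (r - p)))) y)
        * indicator {c j p - w..c j p + w} y \<partial>lborel)"
    and E: "E \<in> sets (PiM ({1..k} \<times> P) (\<lambda>_. lborel))"
    and box: "\<And>x. x \<in> space (PiM ({1..k} \<times> P) (\<lambda>_. lborel)) \<Longrightarrow>
       (\<forall>i\<in>{1..k} \<times> P. x i \<in> {c (fst i) (snd i) - w..c (fst i) (snd i) + w}) \<Longrightarrow> x \<in> E"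
  shows "(\<Prod>i\<in>{1..k} \<times> P. ennreal (\<rho> (snd i))) \<le> emeasure (free_fdd k l r am ap P) E"
proof -
  let ?K = "{1..k} :: nat set"
  let ?M = "PiM (?K \<times> P) (\<lambda>_. lborel)"
  let ?C = "(\<Prod>j\<in>?K. ennreal (1 / heat_kernel (r - l) (ap j - am j)))"
  let ?F = "\<lambda>x. (\<Prod>j\<in>?K. ennreal (Fj l r am ap (?K \<times> P) j x))"
  let ?I = "\<lambda>x. (\<Prod>i\<in>?K \<times> P. indicator {c (fst i) (snd i) - w..c (fst i) (snd i) + w} (x i) :: ennreal)"
  have fin: "finite (?K \<times> P)" using P by simp
  have meas: "?F \<in> borel_measurable ?M"
    by (rule Fj_meas2[OF fin order.refl]) simp
  have measFI: "(\<lambda>x. ?F x * ?I x) \<in> borel_measurable ?M"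
    by (rule integrand_meas[OF fin order.refl]) simp
  have DCK: "DC P (?K \<times> P)" by (auto simp: DC_def)
  have LB: "(\<Prod>j\<in>?K. ennreal (heat_kernel (r - l) (ap j - am j))) * (\<Prod>i\<in>?K \<times> P. ennreal (\<rho> (snd i)))
      \<le> (\<integral>\<^sup>+x. ?F x * ?I x \<partial>?M)"
    by (rule main_lb[OF finite_atLeastAtMost P lr Psub w cl step refl order.refl DCK]) auto
  have "emeasure (free_fdd k l r am ap P) E = (\<integral>\<^sup>+x. ?F x * ?C * indicator E x \<partial>?M)"
    unfolding free_fdd_def dens_eq[OF P Psub lr finite_atLeastAtMost]
    by (rule emeasure_density[OF borel_measurable_times_ennreal[OF meas measurable_const] E]) simp
  also have "\<dots> \<ge> (\<integral>\<^sup>+x. ?F x * ?I x * ?C \<partial>?M)"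
  proof (intro nn_integral_mono)
    fix x :: "nat \<times> real \<Rightarrow> real" assume x: "x \<in> space ?M"
    show "?F x * ?I x * ?C \<le> ?F x * ?C * indicator E x"
    proof (cases "\<forall>i\<in>?K \<times> P. x i \<in> {c (fst i) (snd i) - w..c (fst i) (snd i) + w}")
      case True
      then have "x \<in> E" using box x by blast
      moreover have "?I x = 1" using True by (intro prod.neutral) auto
      ultimately show ?thesis by simp
    next
      case False
      then obtain i where i: "i \<in> ?K \<times> P" "x i \<notin> {c (fst i) (snd i) - w..c (fst i) (snd i) + w}" by blast
      have I0: "?I x = 0"
        by (rule prod_zero[OF fin], rule bexI[of _ i]) (use i in auto)
      show ?thesis unfolding I0 by simp
    qed
  qed
  also have "(\<integral>\<^sup>+x. ?F x * ?I x * ?C \<partial>?M) = (\<integral>\<^sup>+x. ?F x * ?I x \<partial>?M) * ?C"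
    by (rule nn_integral_multc[OF measFI])
  finally have A: "(\<integral>\<^sup>+x. ?F x * ?I x \<partial>?M) * ?C \<le> emeasure (free_fdd k l r am ap P) E" .
  have "(\<Prod>i\<in>?K \<times> P. ennreal (\<rho> (snd i))) =
     ((\<Prod>j\<in>?K. ennreal (heat_kernel (r - l) (ap j - am j))) * ?C) * (\<Prod>i\<in>?K \<times> P. ennreal (\<rho> (snd i)))"
    using const_cancel[OF lr, of ?K ap am] by simp
  also have "\<dots> = ((\<Prod>j\<in>?K. ennreal (heat_kernel (r - l) (ap j - am j))) * (\<Prod>i\<in>?K \<times> P. ennreal (\<rho> (snd i)))) * ?C"
    by (simp only: ac_simps)
  also have "\<dots> \<le> (\<integral>\<^sup>+x. ?F x * ?I x \<partial>?M) * ?C"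
    by (rule mult_right_mono[OF LB]) simp
  also note A
  finally show ?thesis .
qed


lemma phi_bound:
  fixes K l r t p :: real
  assumes K: "K \<ge> 0" and lt: "l \<le> t" and tp: "t < p" and pr: "p < r"
  shows "\<bar>(r - p) / (r - t) * (K * min (t - l) (r - t)) - K * min (p - l) (r - p)\<bar> \<le> 2 * K * ((p - t) * (r - p) / (r - t))"
    and "(l + r) / 2 \<le> t \<Longrightarrow> (r - p) / (r - t) * (K * min (t - l) (r - t)) - K * min (p - l) (r - p) = 0"
proof -
  define mt where "mt = min (t - l) (r - t)"
  define mp where "mp = min (p - l) (r - p)"
  have rt: "r - t > 0" using tp pr by simp
  have h1: "mp \<le> mt + (p - t)" using tp unfolding mp_def mt_def min_def by auto
  have h2: "mp \<le> r - p" unfolding mp_def by simp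
  have mt0: "mt \<ge> 0" unfolding mt_def using lt tp pr by simp
  have h3: "(r - p) * mt \<le> (r - t) * mp"
  proof (cases "r - p \<le> p - l")
    case True
    then have "mp = r - p" unfolding mp_def by simp
    moreover have "(r - p) * mt \<le> (r - p) * (r - t)"
      using pr by (intro mult_left_mono) (auto simp: mt_def)
    ultimately show ?thesis by (simp add: mult.commute)
  next
    case False
    then have mpe: "mp = p - l" unfolding mp_def by simp
    have "(r - p) * mt \<le> (r - p) * (t - l)"
      using pr by (intro mult_left_mono) (auto simp: mt_def)
    also have "(r - t) * (p - l) - (r - p) * (t - l) = (r - l) * (p - t)" by (simp add: algebra_simps)
    then have "(r - p) * (t - l) \<le> (r - t) * (p - l)"
      using tp pr lt by (smt (verit) mult_nonneg_nonneg)
    finally show ?thesis using mpe by simp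
  qed
  have h4: "(r - t) * mp \<le> 2 * ((p - t) * (r - p)) + (r - p) * mt"
  proof -
    have "(r - t) * mp = (p - t) * mp + (r - p) * mp" by (simp add: algebra_simps)
    also have "(p - t) * mp \<le> (p - t) * (r - p)" using tp h2 by (intro mult_left_mono) auto
    also have "(r - p) * mp \<le> (r - p) * (mt + (p - t))" using pr h1 by (intro mult_left_mono) auto
    finally show ?thesis by (simp add: algebra_simps)
  qed
  define X where "X = (r - t) * mp - (r - p) * mt"
  have X0: "X \<ge> 0" and X1: "X \<le> 2 * ((p - t) * (r - p))" using h3 h4 by (auto simp: X_def)
  have eq: "(r - p) / (r - t) * (K * mt) - K * mp = - (K * X / (r - t))"
    using rt by (simp add: X_def field_simps)
  have "\<bar>(r - p) / (r - t) * (K * mt) - K * mp\<bar> = K * X / (r - t)"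
    unfolding eq using K X0 rt by simp
  also have "\<dots> \<le> K * (2 * ((p - t) * (r - p))) / (r - t)"
    using K X1 rt by (intro divide_right_mono mult_left_mono) auto
  also have "K * (2 * ((p - t) * (r - p))) / (r - t) = 2 * K * ((p - t) * (r - p) / (r - t))" by simp
  finally show "\<bar>(r - p) / (r - t) * (K * min (t - l) (r - t)) - K * min (p - l) (r - p)\<bar> \<le> 2 * K * ((p - t) * (r - p) / (r - t))"
    by (simp add: mt_def mp_def)
  assume "(l + r) / 2 \<le> t"
  then have "mt = r - t" "mp = r - p" using tp unfolding mt_def mp_def by auto
  then show "(r - p) / (r - t) * (K * min (t - l) (r - t)) - K * min (p - l) (r - p) = 0"
    using rt by (simp add: mt_def[symmetric] mp_def[symmetric])
qed

lemma rho_lb: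
  fixes w K B l r t p :: real
  assumes w: "w > 0" and K: "K \<ge> 0" and lt: "l \<le> t" and tp: "t < p" and pr: "p < r"
    and B: "r - l \<le> B"
  shows "min w 1 * exp (- 1) / (sqrt (2 * pi) * (1 + sqrt B)) *
      exp (- (if t < (l + r) / 2 then 4 * K\<^sup>2 * min (p - t) (r - p) else 0))
    \<le> min (w / sqrt ((p - t) * (r - p) / ((p - t) + (r - p)))) 1 *
      exp (- ((\<bar>(r - p) / (r - t) * (K * min (t - l) (r - t)) - K * min (p - l) (r - p)\<bar>
               / sqrt ((p - t) * (r - p) / ((p - t) + (r - p))) + 1)\<^sup>2 / 2)) / sqrt (2 * pi)"
proof -
  define S where "S = (p - t) * (r - p) / (r - t)"
  have rt: "r - t > 0" using tp pr by simp
  have Sdef: "(p - t) * (r - p) / ((p - t) + (r - p)) = S" by (simp add: S_def)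
  define \<sigma> where "\<sigma> = sqrt S"
  have S0: "S > 0" using tp pr by (simp add: S_def)
  have \<sigma>0: "\<sigma> > 0" using S0 by (simp add: \<sigma>_def)
  have \<sigma>sq: "\<sigma>\<^sup>2 = S" using S0 by (simp add: \<sigma>_def)
  have S1: "S \<le> p - t"
  proof -
    have "S = (p - t) * ((r - p) / (r - t))" by (simp add: S_def)
    also have "\<dots> \<le> (p - t) * 1" using tp pr rt by (intro mult_left_mono) auto
    finally show ?thesis by simp
  qed
  have S2: "S \<le> r - p"
  proof -
    have "S = (r - p) * ((p - t) / (r - t))" by (simp add: S_def)
    also have "\<dots> \<le> (r - p) * 1" using tp pr rt by (intro mult_left_mono) auto
    finally show ?thesis by simp
  qed
  have \<sigma>B: "\<sigma> \<le> 1 + sqrt B"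
  proof -
    have "S \<le> B" using S2 B lt tp by simp
    then have "\<sigma> \<le> sqrt B" unfolding \<sigma>_def by simp
    then show ?thesis by simp
  qed
  have Bpos: "B > 0" using B lt tp pr by linarith
  then have sB: "1 + sqrt B > 0" by (simp add: add_pos_nonneg)
  define D where "D = \<bar>(r - p) / (r - t) * (K * min (t - l) (r - t)) - K * min (p - l) (r - p)\<bar>"
  define cost where "cost = (if t < (l + r) / 2 then 4 * K\<^sup>2 * min (p - t) (r - p) else 0)"
  have m1: "min w 1 / (1 + sqrt B) \<le> min (w / \<sigma>) 1"
  proof (cases "w / \<sigma> \<le> 1")
    case True
    have "min w 1 / (1 + sqrt B) \<le> w / (1 + sqrt B)" using sB by (intro divide_right_mono) auto
    also have "\<dots> \<le> w / \<sigma>" using w \<sigma>0 \<sigma>B by (intro divide_left_mono) auto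
    finally show ?thesis using True by simp
  next
    case False
    have sq0: "sqrt B \<ge> 0" using Bpos by simp
    have "min w 1 / (1 + sqrt B) \<le> min w 1 / 1" using sq0 w sB by (intro divide_left_mono) auto
    then have "min w 1 / (1 + sqrt B) \<le> 1" by simp
    then show ?thesis using False by simp
  qed
  have D0: "D \<ge> 0" by (simp add: D_def)
  have e2: "(D / \<sigma>)\<^sup>2 \<le> cost"
  proof (cases "t < (l + r) / 2")
    case True
    have Db: "D \<le> 2 * K * S" unfolding D_def S_def by (rule phi_bound(1)[OF K lt tp pr])
    have "(D / \<sigma>)\<^sup>2 = D\<^sup>2 / S" by (simp add: power_divide \<sigma>sq)
    also have "\<dots> \<le> (2 * K * S)\<^sup>2 / S" using D0 Db S0 by (intro divide_right_mono power_mono) auto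
    also have "\<dots> = 4 * K\<^sup>2 * S" using S0 by (simp add: power2_eq_square)
    also have "\<dots> \<le> 4 * K\<^sup>2 * min (p - t) (r - p)" using S1 S2 by (intro mult_left_mono) auto
    finally show ?thesis using True by (simp add: cost_def)
  next
    case False
    then have "D = 0" unfolding D_def using phi_bound(2)[OF K lt tp pr] by simp
    then show ?thesis using False by (simp add: cost_def)
  qed
  have e1: "(D / \<sigma> + 1)\<^sup>2 / 2 \<le> 1 + cost"
  proof -
    have gen: "(x + 1)\<^sup>2 / 2 \<le> x\<^sup>2 + 1" for x :: real
    proof -
      have "(x + 1)\<^sup>2 = 2 * (x\<^sup>2 + 1) - (x - 1)\<^sup>2" by (simp add: power2_eq_square algebra_simps)
      moreover have "(x - 1)\<^sup>2 \<ge> 0" by simp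
      ultimately have "(x + 1)\<^sup>2 \<le> 2 * (x\<^sup>2 + 1)" by linarith
      then show ?thesis by (simp add: field_simps)
    qed
    have "(D / \<sigma> + 1)\<^sup>2 / 2 \<le> (D / \<sigma>)\<^sup>2 + 1" by (rule gen)
    then show ?thesis using e2 by simp
  qed
  have e3: "exp (- 1) * exp (- cost) \<le> exp (- ((D / \<sigma> + 1)\<^sup>2 / 2))"
    using e1 by (simp add: exp_add[symmetric])
  have "min w 1 * exp (- 1) / (sqrt (2 * pi) * (1 + sqrt B)) * exp (- cost)
      = (min w 1 / (1 + sqrt B)) * (exp (- 1) * exp (- cost)) / sqrt (2 * pi)"
    by (simp add: field_simps)
  also have "\<dots> \<le> min (w / \<sigma>) 1 * exp (- ((D / \<sigma> + 1)\<^sup>2 / 2)) / sqrt (2 * pi)"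
    using m1 e3 w sB \<sigma>0 by (intro divide_right_mono mult_mono) auto
  finally show ?thesis unfolding Sdef \<sigma>_def[symmetric] D_def[symmetric] cost_def[symmetric] .
qed

lemma tele:
  fixes A :: "real set"
  assumes "finite A" "\<forall>p\<in>A. l < p"
  shows "(\<Sum>p\<in>A. p - Max (insert l {q \<in> A. q < p})) = Max (insert l A) - l"
  using assms
proof (induction A rule: finite_ranking_induct[where f = "\<lambda>x. x"])
  case empty
  then show ?case by simp
next
  case (insert x S)
  show ?case
  proof (cases "x \<in> S")
    case True
    then show ?thesis using insert by (simp add: insert_absorb)
  next
    case False
    have Sx: "\<forall>y\<in>S. y < x"
    proof
      fix y assume "y \<in> S"
      then have "y \<le> x" "y \<noteq> x" using insert(2) False by auto
      then show "y < x" by simp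
    qed
    have e1: "{q \<in> insert x S. q < x} = S" using Sx by auto
    have e2: "{q \<in> insert x S. q < p} = {q \<in> S. q < p}" if "p \<in> S" for p
      using that insert(2)[OF that] by auto
    have "(\<Sum>p\<in>insert x S. p - Max (insert l {q \<in> insert x S. q < p}))
        = (x - Max (insert l {q \<in> insert x S. q < x})) + (\<Sum>p\<in>S. p - Max (insert l {q \<in> insert x S. q < p}))"
      by (rule sum.insert[OF insert(1) False])
    also have "(\<Sum>p\<in>S. p - Max (insert l {q \<in> insert x S. q < p})) = (\<Sum>p\<in>S. p - Max (insert l {q \<in> S. q < p}))"
      by (rule sum.cong) (simp_all only: e2)
    also have "{q \<in> insert x S. q < x} = S" by (rule e1)
    also have "(\<Sum>p\<in>S. p - Max (insert l {q \<in> S. q < p})) = Max (insert l S) - l"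
      using insert by auto
    also have "Max (insert l (insert x S)) = x"
      by (rule Max_eqI) (use insert Sx in \<open>auto intro: less_imp_le\<close>)
    ultimately show ?thesis by simp
  qed
qed

lemma predP_facts:
  assumes "finite P" "P \<subseteq> {l<..<r}" "p \<in> P"
  shows "l \<le> predP P l p" "predP P l p < p"
  using assms by (auto simp: predP_def)

lemma cost_sum:
  fixes P :: "real set" and l r T K :: real
  assumes P: "finite P" and Psub: "P \<subseteq> ({l<..<l + sqrt T} \<union> {r - sqrt T<..<r}) \<inter> {l<..<r}"
    and T0: "T \<ge> 0"
  shows "(\<Sum>p\<in>P. if predP P l p < (l + r) / 2 then 4 * K\<^sup>2 * min (p - predP P l p) (r - p) else 0)
      \<le> 8 * K\<^sup>2 * sqrt T"
proof -
  define s where "s = (l + r) / 2"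
  define f where "f = (\<lambda>p. if predP P l p < s then 4 * K\<^sup>2 * min (p - predP P l p) (r - p) else 0)"
  define A where "A = {p \<in> P. p \<le> s}"
  define B where "B = {p \<in> P. s < p}"
  have Ps: "P \<subseteq> {l<..<r}" using Psub by auto
  have finA: "finite A" and finB: "finite B" using P by (auto simp: A_def B_def)
  have PAB: "P = A \<union> B" "A \<inter> B = {}" by (auto simp: A_def B_def)
  have pt: "l \<le> predP P l p" "predP P l p < p" if "p \<in> P" for p
    using predP_facts[OF P Ps that] by auto
  have Asmall: "p - l < sqrt T" if "p \<in> A" for p
    using that Psub by (auto simp: A_def s_def)
  have Bsmall: "r - p < sqrt T" if "p \<in> B" for p
    using that Psub by (auto simp: B_def s_def)
  have sumA: "(\<Sum>p\<in>A. f p) \<le> 4 * K\<^sup>2 * sqrt T"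
  proof -
    have "(\<Sum>p\<in>A. f p) \<le> (\<Sum>p\<in>A. 4 * K\<^sup>2 * (p - Max (insert l {q \<in> A. q < p})))"
    proof (rule sum_mono)
      fix p assume pA: "p \<in> A"
      have pP: "p \<in> P" using pA by (simp add: A_def)
      have "{q \<in> P. q < p} = {q \<in> A. q < p}" using pA by (auto simp: A_def)
      then have pe: "predP P l p = Max (insert l {q \<in> A. q < p})" by (simp add: predP_def)
      have "f p \<le> 4 * K\<^sup>2 * (p - predP P l p)"
        unfolding f_def using pt[OF pP] by (auto intro!: mult_left_mono)
      then show "f p \<le> 4 * K\<^sup>2 * (p - Max (insert l {q \<in> A. q < p}))" using pe by simp
    qed
    also have "\<dots> = 4 * K\<^sup>2 * (\<Sum>p\<in>A. p - Max (insert l {q \<in> A. q < p}))"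
      by (simp add: sum_distrib_left)
    also have "(\<Sum>p\<in>A. p - Max (insert l {q \<in> A. q < p})) = Max (insert l A) - l"
      by (rule tele[OF finA]) (use Ps in \<open>auto simp: A_def\<close>)
    also have "4 * K\<^sup>2 * (Max (insert l A) - l) \<le> 4 * K\<^sup>2 * sqrt T"
    proof (intro mult_left_mono)
      have "Max (insert l A) \<in> insert l A" using finA by (intro Max_in) auto
      then show "Max (insert l A) - l \<le> sqrt T"
        using Asmall T0 by (cases "Max (insert l A) = l") (auto intro: less_imp_le)
    qed simp
    finally show ?thesis .
  qed
  have sumB: "(\<Sum>p\<in>B. f p) \<le> 4 * K\<^sup>2 * sqrt T"
  proof (cases "B = {}")
    case True
    then show ?thesis using T0 by simp
  next
    case False
    define p0 where "p0 = Min B"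
    have p0B: "p0 \<in> B" using finB False by (simp add: p0_def)
    have p0min: "\<forall>q\<in>B. p0 \<le> q" using finB by (simp add: p0_def)
    have z: "f p = 0" if "p \<in> B - {p0}" for p
    proof -
      have "p0 < p" using that p0min by force
      moreover have "p0 \<in> {q \<in> P. q < p}" using p0B calculation by (auto simp: B_def)
      ultimately have "p0 \<le> predP P l p" unfolding predP_def using P by auto
      moreover have "s < p0" using p0B by (simp add: B_def)
      ultimately show ?thesis by (simp add: f_def)
    qed
    have p0r: "p0 < r" using p0B Ps by (auto simp: B_def)
    have "(\<Sum>p\<in>B. f p) = f p0 + (\<Sum>p\<in>B - {p0}. f p)"
      using finB p0B by (simp add: sum.remove)
    also have "(\<Sum>p\<in>B - {p0}. f p) = 0" using z by simp
    also have "f p0 \<le> 4 * K\<^sup>2 * (r - p0)"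
      unfolding f_def using p0r by (auto intro!: mult_left_mono)
    also have "\<dots> \<le> 4 * K\<^sup>2 * sqrt T" using Bsmall[OF p0B] by (intro mult_left_mono) auto
    finally show ?thesis by simp
  qed
  have "(\<Sum>p\<in>P. f p) = (\<Sum>p\<in>A. f p) + (\<Sum>p\<in>B. f p)"
    unfolding PAB(1) using finA finB PAB(2) by (rule sum.union_disjoint)
  also have "\<dots> \<le> 8 * K\<^sup>2 * sqrt T" using sumA sumB by simp
  finally show ?thesis by (simp add: f_def s_def)
qed

lemma prod_bound:
  fixes P :: "real set" and \<rho> cost :: "real \<Rightarrow> real" and \<beta> N Cc :: real
  assumes P: "finite P" and b0: "0 < \<beta>" and b1: "\<beta> \<le> 1"
    and rho: "\<And>p. p \<in> P \<Longrightarrow> \<beta> * exp (- cost p) \<le> \<rho> p"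
    and cs: "(\<Sum>p\<in>P. cost p) \<le> Cc" and N: "real (card P) \<le> N"
  shows "exp (N * ln \<beta> - Cc) \<le> (\<Prod>p\<in>P. \<rho> p)"
proof -
  have "(\<Prod>p\<in>P. \<beta> * exp (- cost p)) \<le> (\<Prod>p\<in>P. \<rho> p)"
    using rho b0 by (intro prod_mono) auto
  moreover have "(\<Prod>p\<in>P. \<beta> * exp (- cost p)) = exp (real (card P) * ln \<beta> - (\<Sum>p\<in>P. cost p))"
  proof -
    have "(\<Prod>p\<in>P. \<beta> * exp (- cost p)) = \<beta> ^ card P * exp (\<Sum>p\<in>P. - cost p)"
      using P by (simp add: prod.distrib exp_sum)
    also have "\<beta> ^ card P = exp (real (card P) * ln \<beta>)"
      using b0 by (simp add: exp_of_nat_mult)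
    finally show ?thesis by (simp add: exp_add[symmetric] sum_negf)
  qed
  moreover have "exp (N * ln \<beta> - Cc) \<le> exp (real (card P) * ln \<beta> - (\<Sum>p\<in>P. cost p))"
  proof -
    have "ln \<beta> \<le> 0" using b0 b1 by simp
    then have "N * ln \<beta> \<le> real (card P) * ln \<beta>" using N by (intro mult_right_mono_neg) auto
    then show ?thesis using cs by simp
  qed
  ultimately show ?thesis by linarith
qed

lemma chain_mono:
  fixes f :: "nat \<Rightarrow> real"
  shows "(\<forall>j\<in>{1..<k}. f (j + 1) \<le> f j) \<Longrightarrow> 1 \<le> j \<Longrightarrow> j \<le> k \<Longrightarrow> f k \<le> f j"
proof (induction k)
  case 0
  then show ?case by simp
next
  case (Suc k)
  show ?case
  proof (cases "j = Suc k")
    case True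
    then show ?thesis by simp
  next
    case False
    then have jk: "j \<le> k" using Suc.prems by simp
    have "f (Suc k) \<le> f k" using Suc.prems jk by auto
    also have "f k \<le> f j" using Suc.IH Suc.prems jk by auto
    finally show ?thesis .
  qed
qed

lemma lin_interp:
  fixes l r t p am ap :: real
  assumes "l < r" "t < r"
  shows "am + (p - l) / (r - l) * (ap - am) = (r - p) / (r - t) * (am + (t - l) / (r - l) * (ap - am)) + (p - t) / (r - t) * ap"
proof -
  define d where "d = r - l"
  define e where "e = r - t"
  have d: "d > 0" and e: "e > 0" using assms by (auto simp: d_def e_def)
  have L: "(am + (p - l) / d * (ap - am)) * (d * e) = am * d * e + (p - l) * e * (ap - am)"
    using d e by (simp add: field_simps)
  have R: "((r - p) / e * (am + (t - l) / d * (ap - am)) + (p - t) / e * ap) * (d * e)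
      = (r - p) * (am * d + (t - l) * (ap - am)) + (p - t) * d * ap"
    using d e by (simp add: field_simps)
  have I: "am * d * e + (p - l) * e * (ap - am) = (r - p) * (am * d + (t - l) * (ap - am)) + (p - t) * d * ap"
    unfolding d_def e_def by (simp add: algebra_simps)
  have "(am + (p - l) / d * (ap - am)) * (d * e) = ((r - p) / e * (am + (t - l) / d * (ap - am)) + (p - t) / e * ap) * (d * e)"
    using L R I by simp
  then have "am + (p - l) / d * (ap - am) = (r - p) / e * (am + (t - l) / d * (ap - am)) + (p - t) / e * ap"
    using d e by simp
  then show ?thesis by (simp add: d_def e_def)
qed

lemma convex_ge:
  fixes u v L \<theta> :: real
  assumes "0 \<le> \<theta>" "\<theta> \<le> 1" "L \<le> u" "L \<le> v"
  shows "L \<le> u + \<theta> * (v - u)"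
proof -
  have "u + \<theta> * (v - u) = (1 - \<theta>) * u + \<theta> * v" by (simp add: algebra_simps)
  also have "\<dots> \<ge> (1 - \<theta>) * L + \<theta> * L" using assms by (intro add_mono mult_left_mono) auto
  finally show ?thesis by (simp add: algebra_simps)
qed


lemma powr52: "T > 0 \<Longrightarrow> T powr (5/2) = T\<^sup>2 * sqrt T"
proof -
  assume T: "T > 0"
  have e: "(5/2::real) = 2 + 1/2" by simp
  have "T powr (5/2) = T powr 2 * T powr (1/2)" by (simp only: e powr_add)
  also have "T powr 2 = T\<^sup>2" using T by (simp add: powr_numeral)
  also have "T powr (1/2) = sqrt T" using T by (simp add: powr_half_sqrt)
  finally show ?thesis .
qed

theorem mainTheorem6:
  fixes k :: nat and b0 b1 lam0 lam1 \<mu> :: real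
  assumes "k \<ge> 1" and "b0 > 0" and "b1 > 0" and "lam0 > 0" and "lam1 > 0"
    and "0 < \<mu>" and "\<mu> < 1"
  shows "\<exists>C>0. \<forall>b2>0. \<forall>T l r (am :: nat \<Rightarrow> real) (ap :: nat \<Rightarrow> real) (g :: real \<Rightarrow> real) (P :: real set).
     T \<ge> 10 \<longrightarrow> l < r \<longrightarrow> g l = 0 \<longrightarrow> g r = 0 \<longrightarrow>
     finite P \<longrightarrow> P \<subseteq> ({l<..<l + sqrt T} \<union> {r - sqrt T<..<r}) \<inter> {l<..<r} \<longrightarrow>
     r - l \<le> b0 * T \<longrightarrow> real (card P) \<le> b0 * T \<longrightarrow>
     (\<forall>x\<in>{l..r}. \<forall>y\<in>{l..r}. \<bar>g x - g y\<bar> \<le> b1 * T * \<bar>x - y\<bar>) \<longrightarrow>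
     (\<forall>j\<in>{1..<k}. am j - am (j+1) \<ge> lam0 * sqrt T \<and> ap j - ap (j+1) \<ge> lam0 * sqrt T) \<longrightarrow>
     am k - g l \<ge> lam1 * T \<longrightarrow> ap k - g r \<ge> lam1 * T \<longrightarrow>
     am 1 - g l \<le> b2 * T\<^sup>2 \<longrightarrow> ap 1 - g r \<le> b2 * T\<^sup>2 \<longrightarrow>
     PL_H k l r am ap P g \<mu> lam0 lam1 T \<ge> (1 / C) * exp (- C * T powr (5/2))"
proof -
  note hk = assms(1) and hb0 = assms(2) and hb1 = assms(3) and hl0 = assms(4) and hl1 = assms(5)
    and hmu0 = assms(6) and hmu1 = assms(7)
  define w where "w = min ((1 - \<mu>) * lam0 / 2) ((1 - \<mu>) * lam1)"
  have w0: "w > 0" using hl0 hl1 hmu1 by (simp add: w_def)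
  have w1: "2 * w \<le> (1 - \<mu>) * lam0" and w2: "w \<le> (1 - \<mu>) * lam1" by (auto simp: w_def)
  define A0 where "A0 = - ln (min w 1) + 1 + ln (sqrt (2 * pi))"
  have A0: "A0 \<ge> 0"
  proof -
    have "ln (min w 1) \<le> 0" using w0 by simp
    moreover have "ln (sqrt (2 * pi)) \<ge> 0" using pi_gt3 by simp
    ultimately show ?thesis by (simp add: A0_def)
  qed
  define C0 where "C0 = real k * (b0 * A0 + b0 * sqrt b0 + 8 * b1\<^sup>2)"
  have C0: "C0 \<ge> 0" using A0 hb0 by (simp add: C0_def)
  define C where "C = C0 + 1"
  show ?thesis
  proof (intro exI[of _ C] conjI allI impI)
    show "C > 0" using C0 by (simp add: C_def)
    fix b2 T l r and am ap :: "nat \<Rightarrow> real" and g :: "real \<Rightarrow> real" and P :: "real set"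
    assume b2: "b2 > 0" and T10: "T \<ge> 10" and lr: "l < r" and gl: "g l = 0" and gr: "g r = 0"
      and finP: "finite P" and Psub: "P \<subseteq> ({l<..<l + sqrt T} \<union> {r - sqrt T<..<r}) \<inter> {l<..<r}"
      and rl: "r - l \<le> b0 * T" and cardP: "real (card P) \<le> b0 * T"
      and lip: "\<forall>x\<in>{l..r}. \<forall>y\<in>{l..r}. \<bar>g x - g y\<bar> \<le> b1 * T * \<bar>x - y\<bar>"
      and gaps: "\<forall>j\<in>{1..<k}. am j - am (j+1) \<ge> lam0 * sqrt T \<and> ap j - ap (j+1) \<ge> lam0 * sqrt T"
      and amk: "am k - g l \<ge> lam1 * T" and apk: "ap k - g r \<ge> lam1 * T"
      and "am 1 - g l \<le> b2 * T\<^sup>2" "ap 1 - g r \<le> b2 * T\<^sup>2"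
    have T0: "T > 0" and T1: "T \<ge> 1" using T10 by auto
    have sT1: "sqrt T \<ge> 1" using T1 by simp
    have Ps: "P \<subseteq> {l<..<r}" using Psub by auto
    define Kc where "Kc = b1 * T"
    have Kc0: "Kc \<ge> 0" using hb1 T0 by (simp add: Kc_def)
    define \<phi> where "\<phi> = (\<lambda>p. Kc * min (p - l) (r - p))"
    define m where "m = (\<lambda>j p. am j + (p - l) / (r - l) * (ap j - am j))"
    define c where "c = (\<lambda>j p. m j p + \<phi> p)"
    define \<sigma> where "\<sigma> = (\<lambda>p. sqrt ((p - predP P l p) * (r - p) / ((p - predP P l p) + (r - p))))"
    define D where "D = (\<lambda>p. \<bar>(r - p) / (r - predP P l p) * \<phi> (predP P l p) - \<phi> p\<bar>)"
    define \<rho> where "\<rho> = (\<lambda>p. min (w / \<sigma> p) 1 * exp (- ((D p / \<sigma> p + 1)\<^sup>2 / 2)) / sqrt (2 * pi))"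
    let ?M = "free_fdd k l r am ap P"
    let ?W = "W_event k P g"
    let ?H = "H_event k P g \<mu> lam0 lam1 T"
    have pt: "l \<le> predP P l p" "predP P l p < p" "p < r" if "p \<in> P" for p
      using predP_facts[OF finP Ps that] that Ps by auto
    have gphi: "g p \<le> \<phi> p" if "p \<in> P" for p
    proof -
      have pl: "l < p" "p < r" using that Ps by auto
      have "g p \<le> \<bar>g p - g l\<bar>" using gl by simp
      also have "\<dots> \<le> b1 * T * \<bar>p - l\<bar>" by (rule lip[rule_format]) (use pl in auto)
      finally have g1: "g p \<le> Kc * (p - l)" using pl by (simp add: Kc_def)
      have "g p \<le> \<bar>g p - g r\<bar>" using gr by simp
      also have "\<dots> \<le> b1 * T * \<bar>p - r\<bar>" by (rule lip[rule_format]) (use pl in auto)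
      finally have g2: "g p \<le> Kc * (r - p)" using pl by (simp add: Kc_def)
      show ?thesis using g1 g2 by (simp add: \<phi>_def min_def)
    qed
    have mgap: "m j p - m (j + 1) p \<ge> lam0 * sqrt T" if "j \<in> {1..<k}" "p \<in> P" for j p
    proof -
      have th: "0 \<le> (p - l) / (r - l)" "(p - l) / (r - l) \<le> 1" using that Ps lr by auto
      define th where "th = (p - l) / (r - l)"
      have mth: "m i p = am i + th * (ap i - am i)" for i by (simp add: m_def th_def)
      have "m j p - m (j + 1) p = (am j - am (j+1)) + (p - l) / (r - l) * ((ap j - ap (j+1)) - (am j - am (j+1)))"
        unfolding mth th_def[symmetric] by (simp add: algebra_simps)
      also have "\<dots> \<ge> lam0 * sqrt T"
        by (rule convex_ge[OF th]) (use gaps that in auto)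
      finally show ?thesis .
    qed
    have mk: "m k p \<ge> lam1 * T" if "p \<in> P" for p
    proof -
      have th: "0 \<le> (p - l) / (r - l)" "(p - l) / (r - l) \<le> 1" using that Ps lr by auto
      show ?thesis unfolding m_def by (rule convex_ge[OF th]) (use amk apk gl gr in auto)
    qed
    have mj: "m j p \<ge> m k p" if "j \<in> {1..k}" "p \<in> P" for j p
    proof -
      have "\<forall>i\<in>{1..<k}. m (i + 1) p \<le> m i p"
        using mgap[OF _ that(2)] hl0 sT1 by (smt (verit) mult_nonneg_nonneg)
      then show ?thesis using chain_mono[of k "\<lambda>i. m i p" j] that by auto
    qed
    have box: "x \<in> ?W \<inter> ?H"
      if xs: "x \<in> space (PiM ({1..k} \<times> P) (\<lambda>_. lborel))"
        and xb: "\<forall>i\<in>{1..k} \<times> P. x i \<in> {c (fst i) (snd i) - w..c (fst i) (snd i) + w}" for x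
    proof -
      have xl: "c j p - w \<le> x (j, p)" and xu: "x (j, p) \<le> c j p + w" if "j \<in> {1..k}" "p \<in> P" for j p
        using xb that by force+
      have H1: "\<mu> * lam0 * sqrt T \<le> x (j, p) - x (j + 1, p)" if "p \<in> P" "j \<in> {1..<k}" for p j
      proof -
        have a: "c j p - w \<le> x (j, p)" using xl that by auto
        have b: "x (j + 1, p) \<le> c (j + 1) p + w" using xu that by auto
        have "(1 - \<mu>) * lam0 \<le> (1 - \<mu>) * lam0 * sqrt T" using hmu1 hl0 sT1 by simp
        moreover have "lam0 * sqrt T - (1 - \<mu>) * lam0 * sqrt T = \<mu> * lam0 * sqrt T" by (simp add: algebra_simps)
        ultimately show ?thesis using a b mgap[OF that(2,1)] w1 unfolding c_def by linarith
      qed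
      have H2: "\<mu> * lam1 * T \<le> x (k, p) - g p" if "p \<in> P" for p
      proof -
        have a: "c k p - w \<le> x (k, p)" using xl that hk by auto
        have "(1 - \<mu>) * lam1 \<le> (1 - \<mu>) * lam1 * T" using hmu1 hl1 T1 by simp
        moreover have "lam1 * T - (1 - \<mu>) * lam1 * T = \<mu> * lam1 * T" by (simp add: algebra_simps)
        ultimately show ?thesis using a mk[OF that] gphi[OF that] w2 unfolding c_def by linarith
      qed
      have Wx: "g p < x (j, p)" if "j \<in> {1..k}" "p \<in> P" for j p
      proof -
        have a: "c j p - w \<le> x (j, p)" using xl that by auto
        have "(1 - \<mu>) * lam1 < lam1 * T"
        proof -
          have "(1 - \<mu>) * lam1 < lam1" using hmu0 hl1 by simp
          also have "lam1 \<le> lam1 * T" using hl1 T1 by simp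
          finally show ?thesis .
        qed
        then show ?thesis using a mj[OF that] mk[OF that(2)] gphi[OF that(2)] w2 unfolding c_def by linarith
      qed
      show ?thesis using xs H1 H2 Wx by (auto simp: W_event_def H_event_def)
    qed
    have EH: "?W \<inter> ?H \<in> sets (PiM ({1..k} \<times> P) (\<lambda>_. lborel))"
      using W_sets[OF finP] H_sets[OF hk finP] by blast
    have cl: "c j l = am j" for j using lr by (simp add: c_def m_def \<phi>_def)
    have step: "ennreal (\<rho> p) \<le> (\<integral>\<^sup>+y. ennreal (normal_density (v + (p - predP P l p) / ((p - predP P l p) + (r - p)) * (ap j - v))
          (sqrt ((p - predP P l p) * (r - p) / ((p - predP P l p) + (r - p)))) y)
        * indicator {c j p - w..c j p + w} y \<partial>lborel)"
      if "j \<in> {1..k}" "p \<in> P" "\<bar>v - c j (predP P l p)\<bar> \<le> w" for j p v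
    proof -
      define t where "t = predP P l p"
      have t: "l \<le> t" "t < p" "p < r" using pt[OF that(2)] by (auto simp: t_def)
      have rt: "r - t > 0" using t by simp
      have spos: "\<sigma> p > 0" using t by (simp add: \<sigma>_def t_def[symmetric])
      have D0: "D p \<ge> 0" by (simp add: D_def)
      have li: "m j p = (r - p) / (r - t) * m j t + (p - t) / (r - t) * ap j"
        unfolding m_def by (rule lin_interp) (use lr t in auto)
      have mu: "v + (p - t) / ((p - t) + (r - p)) * (ap j - v) = (r - p) / (r - t) * v + (p - t) / (r - t) * ap j"
      proof -
        have e1: "(p - t) + (r - p) = r - t" by simp
        have e2: "(r - p) / (r - t) = 1 - (p - t) / (r - t)" using rt by (simp add: field_simps)
        define th where "th = (p - t) / (r - t)"
        show ?thesis unfolding e1 e2 th_def[symmetric] by (simp add: algebra_simps)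
      qed
      have diff: "v + (p - t) / ((p - t) + (r - p)) * (ap j - v) - c j p
          = (r - p) / (r - t) * (v - c j t) + ((r - p) / (r - t) * \<phi> t - \<phi> p)"
      proof -
        define q1 where "q1 = (r - p) / (r - t)"
        define q2 where "q2 = (p - t) / (r - t)"
        show ?thesis unfolding mu c_def li q1_def[symmetric] q2_def[symmetric] by (simp add: algebra_simps)
      qed
      have q: "0 \<le> (r - p) / (r - t)" "(r - p) / (r - t) \<le> 1" using t rt by auto
      have vt: "\<bar>v - c j t\<bar> \<le> w" using that(3) unfolding t_def[symmetric] .
      have "\<bar>(r - p) / (r - t) * (v - c j t)\<bar> = (r - p) / (r - t) * \<bar>v - c j t\<bar>"
        by (simp only: abs_mult abs_of_nonneg[OF q(1)])
      also have "\<dots> \<le> 1 * w" by (rule mult_mono) (use q vt w0 in auto)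
      finally have qv: "\<bar>(r - p) / (r - t) * (v - c j t)\<bar> \<le> w" by simp
      have Dt: "D p = \<bar>(r - p) / (r - t) * \<phi> t - \<phi> p\<bar>" by (simp add: D_def t_def)
      have close: "\<bar>v + (p - t) / ((p - t) + (r - p)) * (ap j - v) - c j p\<bar> \<le> w + D p"
        unfolding diff Dt by (rule order_trans[OF abs_triangle_ineq add_right_mono[OF qv]])
      have "ennreal (min (w / \<sigma> p) 1 * exp (- ((D p / \<sigma> p + 1)\<^sup>2 / 2)) / sqrt (2 * pi))
        \<le> (\<integral>\<^sup>+y. ennreal (normal_density (v + (p - t) / ((p - t) + (r - p)) * (ap j - v)) (\<sigma> p) y)
             * indicator {c j p - w..c j p + w} y \<partial>lborel)"
        by (rule nd_interval_lb[OF spos w0 D0 close])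
      then show ?thesis unfolding \<rho>_def t_def \<sigma>_def .
    qed
    have LB: "(\<Prod>i\<in>{1..k} \<times> P. ennreal (\<rho> (snd i))) \<le> emeasure ?M (?W \<inter> ?H)"
      by (rule fdd_lower[OF finP Ps lr w0 _ step EH box]) (simp_all add: cl)
    define \<beta> where "\<beta> = min w 1 * exp (- 1) / (sqrt (2 * pi) * (1 + sqrt (b0 * T)))"
    define cost where "cost = (\<lambda>p. if predP P l p < (l + r) / 2 then 4 * Kc\<^sup>2 * min (p - predP P l p) (r - p) else 0)"
    have sb0: "sqrt (b0 * T) \<ge> 0" using hb0 T0 by simp
    have sb1: "1 + sqrt (b0 * T) > 0" using sb0 by linarith
    have \<beta>0: "\<beta> > 0"
    proof -
      have "min w 1 * exp (- 1) > 0" using w0 by simp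
      moreover have "sqrt (2 * pi) * (1 + sqrt (b0 * T)) > 0"
      proof (rule mult_pos_pos)
        show "1 + sqrt (b0 * T) > 0" using sb0 by linarith
      qed simp
      ultimately show ?thesis unfolding \<beta>_def by (rule divide_pos_pos)
    qed
    have \<beta>1: "\<beta> \<le> 1"
    proof -
      have "min w 1 * exp (- 1) \<le> 1 * 1" using w0 by (intro mult_mono) auto
      moreover have "1 \<le> sqrt (2 * pi) * (1 + sqrt (b0 * T))"
      proof -
        have "1 \<le> sqrt (2 * pi)" using pi_gt3 by simp
        moreover have "1 \<le> 1 + sqrt (b0 * T)" using sb0 by simp
        ultimately show ?thesis using mult_mono[of 1 "sqrt (2 * pi)" 1 "1 + sqrt (b0 * T)"] by simp
      qed
      ultimately show ?thesis unfolding \<beta>_def by (simp add: divide_le_eq_1)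
    qed
    have rhob: "\<beta> * exp (- cost p) \<le> \<rho> p" if "p \<in> P" for p
      unfolding \<beta>_def cost_def \<rho>_def \<sigma>_def D_def \<phi>_def
      by (rule rho_lb[OF w0 Kc0 pt[OF that] rl])
    have csum: "(\<Sum>p\<in>P. cost p) \<le> 8 * Kc\<^sup>2 * sqrt T"
      unfolding cost_def by (rule cost_sum[OF finP Psub]) (use T0 in simp)
    have PB: "exp (b0 * T * ln \<beta> - 8 * Kc\<^sup>2 * sqrt T) \<le> (\<Prod>p\<in>P. \<rho> p)"
      by (rule prod_bound[OF finP \<beta>0 \<beta>1 rhob csum cardP])
    have lnb: "ln \<beta> \<ge> - A0 - sqrt b0 * sqrt T"
    proof -
      have pos: "min w 1 > 0" "exp (- 1) > (0::real)" "sqrt (2 * pi) > 0" "1 + sqrt (b0 * T) > 0"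
        using w0 sb1 by auto
      have gen: "ln (a * e / (s * u)) = ln a + ln e - ln s - ln u" if "a > 0" "e > 0" "s > 0" "u > 0" for a e s u :: real
        using that by (simp add: ln_div ln_mult)
      have "ln \<beta> = ln (min w 1) + ln (exp (- 1)) - ln (sqrt (2 * pi)) - ln (1 + sqrt (b0 * T))"
        unfolding \<beta>_def by (rule gen[OF pos])
      also have "\<dots> = - A0 - ln (1 + sqrt (b0 * T))" by (simp add: A0_def)
      finally have e: "ln \<beta> = - A0 - ln (1 + sqrt (b0 * T))" .
      have "ln (1 + sqrt (b0 * T)) \<le> sqrt (b0 * T)" using sb0 by (rule ln_add_one_self_le_self)
      also have "sqrt (b0 * T) = sqrt b0 * sqrt T" by (simp add: real_sqrt_mult)
      finally show ?thesis using e by linarith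
    qed
    define X where "X = T\<^sup>2 * sqrt T"
    have X1: "T \<le> X" and X2: "T * sqrt T \<le> X"
    proof -
      have "T * 1 \<le> T * sqrt T" using T0 sT1 by (intro mult_left_mono) auto
      also have "T * sqrt T \<le> T * T * sqrt T" using T1 T0 by (intro mult_right_mono) auto
      finally show "T \<le> X" "T * sqrt T \<le> X" using \<open>T * sqrt T \<le> T * T * sqrt T\<close>
        by (simp_all add: X_def power2_eq_square)
    qed
    have expo: "- (b0 * A0 + b0 * sqrt b0 + 8 * b1\<^sup>2) * X \<le> b0 * T * ln \<beta> - 8 * Kc\<^sup>2 * sqrt T"
    proof -
      have "b0 * T * ln \<beta> \<ge> b0 * T * (- A0 - sqrt b0 * sqrt T)"
        using lnb hb0 T0 by (intro mult_left_mono) auto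
      moreover have "b0 * T * (- A0 - sqrt b0 * sqrt T) = - (b0 * A0) * T - (b0 * sqrt b0) * (T * sqrt T)"
        by (simp add: algebra_simps)
      moreover have "(b0 * A0) * T \<le> (b0 * A0) * X" using X1 hb0 A0 by (intro mult_left_mono) auto
      moreover have "(b0 * sqrt b0) * (T * sqrt T) \<le> (b0 * sqrt b0) * X" using X2 hb0 by (intro mult_left_mono) auto
      moreover have "8 * Kc\<^sup>2 * sqrt T = 8 * b1\<^sup>2 * X" by (simp add: Kc_def X_def power_mult_distrib)
      ultimately show ?thesis by (simp add: algebra_simps)
    qed
    have prodP: "exp (- C0 * X) \<le> (\<Prod>p\<in>P. \<rho> p) ^ k"
    proof -
      have "exp (- (b0 * A0 + b0 * sqrt b0 + 8 * b1\<^sup>2) * X) \<le> (\<Prod>p\<in>P. \<rho> p)"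
        using expo PB by (meson exp_le_cancel_iff order_trans)
      then have "exp (- (b0 * A0 + b0 * sqrt b0 + 8 * b1\<^sup>2) * X) ^ k \<le> (\<Prod>p\<in>P. \<rho> p) ^ k"
        by (intro power_mono) auto
      moreover have "exp (- (b0 * A0 + b0 * sqrt b0 + 8 * b1\<^sup>2) * X) ^ k = exp (- C0 * X)"
        by (simp add: C0_def exp_of_nat_mult[symmetric] algebra_simps)
      ultimately show ?thesis by simp
    qed
    have rho0: "\<rho> p \<ge> 0" if "p \<in> P" for p
    proof -
      have "\<sigma> p \<ge> 0" using pt[OF that] by (simp add: \<sigma>_def)
      then have "min (w / \<sigma> p) 1 \<ge> 0" using w0 by simp
      then show ?thesis by (simp add: \<rho>_def)
    qed
    have prodK: "(\<Prod>i\<in>{1..k} \<times> P. ennreal (\<rho> (snd i))) = ennreal ((\<Prod>p\<in>P. \<rho> p) ^ k)"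
    proof -
      have "(\<Prod>i\<in>{1..k} \<times> P. ennreal (\<rho> (snd i))) = (\<Prod>(j, p)\<in>{1..k} \<times> P. ennreal (\<rho> p))"
        by (rule prod.cong) auto
      also have "\<dots> = (\<Prod>j\<in>{1..k}. \<Prod>p\<in>P. ennreal (\<rho> p))"
        by (rule prod.cartesian_product[symmetric])
      also have "\<dots> = (\<Prod>p\<in>P. ennreal (\<rho> p)) ^ k" by simp
      also have "(\<Prod>p\<in>P. ennreal (\<rho> p)) = ennreal (\<Prod>p\<in>P. \<rho> p)" using rho0 by (simp add: prod_ennreal)
      finally show ?thesis using rho0 by (simp add: ennreal_power prod_nonneg)
    qed
    define Y where "Y = (\<Prod>p\<in>P. \<rho> p) ^ k"
    have Y0: "Y > 0" using prodP unfolding Y_def by (meson exp_gt_zero less_le_trans)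
    have sp1: "emeasure ?M (space ?M) = 1" by (rule fdd_space[OF finP Ps lr])
    have setsM: "sets ?M = sets (PiM ({1..k} \<times> P) (\<lambda>_. lborel))" by (simp add: free_fdd_def)
    have Wset: "?W \<in> sets ?M" using W_sets[OF finP] setsM by simp
    have WHset: "?W \<inter> ?H \<in> sets ?M" using EH setsM by simp
    have fin1: "emeasure ?M A \<le> 1" for A
      using emeasure_space[of ?M A] sp1 by simp
    have eWH: "emeasure ?M (?W \<inter> ?H) = ennreal (measure ?M (?W \<inter> ?H))"
      using fin1[of "?W \<inter> ?H"] by (intro emeasure_eq_ennreal_measure) (auto simp: top_unique)
    have eW: "emeasure ?M ?W = ennreal (measure ?M ?W)"
      using fin1[of ?W] by (intro emeasure_eq_ennreal_measure) (auto simp: top_unique)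
    have a1: "Y \<le> measure ?M (?W \<inter> ?H)"
      using LB prodK eWH unfolding Y_def[symmetric] by (simp add: ennreal_le_iff)
    have a2: "measure ?M (?W \<inter> ?H) \<le> measure ?M ?W"
    proof -
      have "emeasure ?M (?W \<inter> ?H) \<le> emeasure ?M ?W" by (rule emeasure_mono) (auto simp: Wset)
      then show ?thesis using eWH eW by simp
    qed
    have a3: "measure ?M ?W \<le> 1" using fin1[of ?W] eW by (simp add: ennreal_le_1)
    have ratio: "measure ?M (?W \<inter> ?H) \<le> PL_H k l r am ap P g \<mu> lam0 lam1 T"
    proof -
      have "measure ?M (?W \<inter> ?H) / 1 \<le> measure ?M (?W \<inter> ?H) / measure ?M ?W"
        using a1 a2 a3 Y0 by (intro divide_left_mono) auto
      then show ?thesis by (simp add: PL_H_def)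
    qed
    have fin: "(1 / C) * exp (- C * T powr (5/2)) \<le> exp (- C0 * X)"
    proof -
      have TX: "T powr (5/2) = X" using powr52[OF T0] by (simp add: X_def)
      have X0: "X \<ge> 0" using T0 by (simp add: X_def)
      have e: "- C * X \<le> - C0 * X" using X0 by (simp add: C_def algebra_simps)
      have c1: "1 / C \<le> 1" using C0 by (simp add: C_def)
      have "(1 / C) * exp (- C * X) \<le> 1 * exp (- C0 * X)"
        using c1 e by (intro mult_mono) auto
      then show ?thesis using TX by simp
    qed
    show "(1 / C) * exp (- C * T powr (5/2)) \<le> PL_H k l r am ap P g \<mu> lam0 lam1 T"
      using fin prodP a1 ratio unfolding Y_def by linarith
  qed
qed


end
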